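(* Let $p=3$, let $n_1,n_2\ge1$, $s\ge0$ and $n=n_1+2n_2+s$, and let $f:\mathbb{F}_3^{n}=\mathbb{F}_3^{n_1}\times\mathbb{F}_3^{n_2}\times\mathbb{F}_3^{n_2}\times\mathbb{F}_3^{s}\to\mathbb{F}_3$ be the function $f(x,y,z,r)=f^{(z)}(x)+\sum_{i=1}^{n_2}y_iz_i$, where $f^{(0)}(x)=\sum_{i=1}^{n_1}u_ix_i^2$ and $f^{(z)}(x)=\sum_{i=1}^{n_1}v_ix_i^2$ for $z\ne0$, with $u_i,v_i\in\mathbb{F}_3^*$; let $\epsilon_0$ be the type of $f$. Let $\alpha_i=e_i$ for $1\le i\le n_1$ and $\alpha_i=e_1+e_i$ for $n_1<i\le n$, let $H^{(1)}=(\alpha_i\cdot\alpha_j)_{1\le i,j\le n}$, let $T$ be a subset of $D_{f,0}\setminus\{0\}$ such that every element of $D_{f,0}\setminus\{0\}$ is uniquely $ax$ with $a\in\mathbb{F}_3^*$, $x\in T$, and let $G$ be the $n\times\#T$ matrix whose $i$-th row is $(\alpha_i\cdot x)_{x\in T}$, and $G'=[H^{(1)},G]$. If $n+s$ is even with $0\le s\le n-4$ and $n+s\ge6$, then $G'$ generates a ternary $[\frac{3^{n-1}+2\epsilon_0\cdot3^{\frac{n+s}{2}-1}-1}{2}+n,\,n]$ LCD code $\mathcal{C}$, and $\mathcal{C}^\perp$ is a ternary $[\frac{3^{n-1}+2\epsilon_0\cdot3^{\frac{n+s}{2}-1}-1}{2}+n,\,\frac{3^{n-1}+2\epsilon_0\cdot3^{\frac{n+s}{2}-1}-1}{2},\,3]$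 LCD code. If $n+s$ is odd with $0\le s\le n-3$ and $n+s\ge5$, then $G'$ generates a ternary $[\frac{3^{n-1}-1}{2}+n,\,n]$ LCD code $\mathcal{C}$, and $\mathcal{C}^\perp$ is a ternary $[\frac{3^{n-1}-1}{2}+n,\,\frac{3^{n-1}-1}{2},\,3]$ LCD code.
   Context: $\mathbb{F}_3^n$ carries the dot product $a\cdot b=\sum a_ib_i$, and $e_i$ is the $i$-th standard basis vector (coordinates ordered as $x,y,z,r$). $D_{f,0}=\{w:f(w)=0\}$. Walsh transform: $\widehat{\chi_f}(\alpha)=\sum_{w}\xi_3^{f(w)-\alpha\cdot w}$ with $\xi_3=e^{2\pi\sqrt{-1}/3}$; the function $f$ above is $s$-plateaued, i.e. $|\widehat{\chi_f}(\alpha)|\in\{0,3^{(n+s)/2}\}$, and $\widehat{\chi_f}(0)=\epsilon_0\mu 3^{(n+s)/2}\xi_3^{c}$ for some $c\in\mathbb{F}_3$, with $\epsilon_0\in\{\pm1\}$ (the type of $f$), where $\mu=1$ if $3^{n+s}\equiv1\pmod4$ and $\mu=\sqrt{-1}$ otherwise. A linear code is LCD if $\mathcal{C}\cap\mathcal{C}^\perp=\{0\}$ (dual w.r.t. the dot product); $[N,K,d]$ = length, dimension, minimum distance. *)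

theory Defs
  imports Complex_Main
begin

text \<open>The field F_3 is represented by the integers 0, 1, 2 with
arithmetic taken mod 3. A vector of F_3^n is a function nat => int whose
values at 0..n-1 lie in {0,1,2} and which vanishes from n on. Coordinates
are 0-indexed: x = w 0 .. w (n1-1), y = w n1 .. w (n1+n2-1),
z = w (n1+n2) .. w (n1+2 n2-1), r = the remaining s coordinates.\<close>

definition F3vec :: "nat \<Rightarrow> (nat \<Rightarrow> int) set" where
  "F3vec n = {v. \<forall>k. (k < n \<longrightarrow> v k \<in> {0,1,2}) \<and> (n \<le> k \<longrightarrow> v k = 0)}"

definition dot3 :: "nat \<Rightarrow> (nat \<Rightarrow> int) \<Rightarrow> (nat \<Rightarrow> int) \<Rightarrow> int" where
  "dot3 n a b = (\<Sum>k<n. a k * b k) mod 3"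

definition vscale3 :: "int \<Rightarrow> (nat \<Rightarrow> int) \<Rightarrow> (nat \<Rightarrow> int)" where
  "vscale3 a x = (\<lambda>k. (a * x k) mod 3)"

definition unitvec :: "nat \<Rightarrow> (nat \<Rightarrow> int)" where
  "unitvec i = (\<lambda>k. if k = i then 1 else 0)"

definition fF :: "nat \<Rightarrow> nat \<Rightarrow> (nat \<Rightarrow> int) \<Rightarrow> (nat \<Rightarrow> int) \<Rightarrow> (nat \<Rightarrow> int) \<Rightarrow> int" where
  "fF n1 n2 u v w =
     ((if (\<forall>i<n2. w (n1 + n2 + i) = 0)
       then (\<Sum>i<n1. u i * (w i)^2)
       else (\<Sum>i<n1. v i * (w i)^2))
      + (\<Sum>i<n2. w (n1 + i) * w (n1 + n2 + i))) mod 3"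

definition xi3 :: complex where
  "xi3 = cis (2 * pi / 3)"

definition walsh :: "nat \<Rightarrow> ((nat \<Rightarrow> int) \<Rightarrow> int) \<Rightarrow> (nat \<Rightarrow> int) \<Rightarrow> complex" where
  "walsh n f \<alpha> = (\<Sum>w\<in>F3vec n. xi3 ^ nat ((f w - dot3 n \<alpha> w) mod 3))"

definition mu3 :: "nat \<Rightarrow> complex" where
  "mu3 m = (if (3::nat) ^ m mod 4 = 1 then 1 else \<i>)"

definition is_type :: "nat \<Rightarrow> nat \<Rightarrow> ((nat \<Rightarrow> int) \<Rightarrow> int) \<Rightarrow> int \<Rightarrow> bool" where
  "is_type n s f eps0 \<longleftrightarrow> eps0 \<in> {1, -1} \<and>
     (\<exists>c\<in>{0,1,2::nat}. walsh n f (\<lambda>_. 0) =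
        of_int eps0 * mu3 (n + s) * complex_of_real (3 powr (real (n + s) / 2)) * xi3 ^ c)"

definition Dzero :: "nat \<Rightarrow> ((nat \<Rightarrow> int) \<Rightarrow> int) \<Rightarrow> (nat \<Rightarrow> int) set" where
  "Dzero n f = {w \<in> F3vec n. f w = 0}"

definition alphavec :: "nat \<Rightarrow> nat \<Rightarrow> (nat \<Rightarrow> int)" where
  "alphavec n1 i = (if i < n1 then unitvec i else (\<lambda>k. unitvec 0 k + unitvec i k))"

text \<open>The matrix G' = [H^(1), G]; rows indexed by i < n, columns by
  Inl j (j < n, the H^(1) part) and Inr x (x in T, the G part).\<close>
definition Gprime :: "nat \<Rightarrow> nat \<Rightarrow> nat \<Rightarrow> (nat + (nat \<Rightarrow> int)) \<Rightarrow> int" where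
  "Gprime n1 n i c = (case c of
      Inl j \<Rightarrow> dot3 n (alphavec n1 i) (alphavec n1 j)
    | Inr x \<Rightarrow> dot3 n (alphavec n1 i) x)"

definition colset :: "nat \<Rightarrow> (nat \<Rightarrow> int) set \<Rightarrow> (nat + (nat \<Rightarrow> int)) set" where
  "colset n T = Inl ` {..<n} \<union> Inr ` T"

definition words3 :: "'j set \<Rightarrow> ('j \<Rightarrow> int) set" where
  "words3 J = {w. (\<forall>j\<in>J. w j \<in> {0,1,2}) \<and> (\<forall>j. j \<notin> J \<longrightarrow> w j = 0)}"

definition gen_code :: "nat \<Rightarrow> 'j set \<Rightarrow> (nat \<Rightarrow> 'j \<Rightarrow> int) \<Rightarrow> ('j \<Rightarrow> int) set" where
  "gen_code k J M = {(\<lambda>j. if j \<in> J then (\<Sum>i<k. c i * M i j) mod 3 else 0) | c. c \<in> F3vec k}"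

definition dual_code :: "'j set \<Rightarrow> ('j \<Rightarrow> int) set \<Rightarrow> ('j \<Rightarrow> int) set" where
  "dual_code J C = {w \<in> words3 J. \<forall>c\<in>C. (\<Sum>j\<in>J. w j * c j) mod 3 = 0}"

definition is_LCD :: "'j set \<Rightarrow> ('j \<Rightarrow> int) set \<Rightarrow> bool" where
  "is_LCD J C \<longleftrightarrow> C \<inter> dual_code J C = {(\<lambda>_. 0)}"

definition wt :: "'j set \<Rightarrow> ('j \<Rightarrow> int) \<Rightarrow> nat" where
  "wt J w = card {j \<in> J. w j \<noteq> 0}"

definition code_NK :: "'j set \<Rightarrow> ('j \<Rightarrow> int) set \<Rightarrow> int \<Rightarrow> int \<Rightarrow> bool" where
  "code_NK J C N K \<longleftrightarrow> finite J \<and> int (card J) = N \<and> K \<ge> 0 \<and> card C = 3 ^ nat K"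

definition min_dist :: "'j set \<Rightarrow> ('j \<Rightarrow> int) set \<Rightarrow> nat \<Rightarrow> bool" where
  "min_dist J C d \<longleftrightarrow> (\<exists>c\<in>C. c \<noteq> (\<lambda>_. 0) \<and> wt J c = d) \<and>
     (\<forall>c\<in>C. c \<noteq> (\<lambda>_. 0) \<longrightarrow> d \<le> wt J c)"

end

theory Submission
  imports Defs
begin

definition Wset :: "nat \<Rightarrow> nat set \<Rightarrow> (nat \<Rightarrow> int) set" where
  "Wset m Z = {w. (\<forall>i. i < m \<and> i \<notin> Z \<longrightarrow> w i \<in> {0,1,2}) \<and> (\<forall>i. m \<le> i \<or> i \<in> Z \<longrightarrow> w i = 0)}"

definition Rng :: "nat \<Rightarrow> nat set \<Rightarrow> int set" where
  "Rng i Z = (if i \<in> Z then {0} else {0,1,2})"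

lemma F3vec_Wset: "F3vec n = Wset n {}"
  unfolding F3vec_def Wset_def by auto

lemma Wset_Suc: "Wset (Suc m) Z = (\<lambda>(a,w). w(m:=a)) ` (Rng m Z \<times> Wset m Z)"
proof
  show "Wset (Suc m) Z \<subseteq> (\<lambda>(a,w). w(m:=a)) ` (Rng m Z \<times> Wset m Z)"
  proof
    fix w assume w: "w \<in> Wset (Suc m) Z"
    have "w = (\<lambda>(a,w). w(m:=a)) (w m, w(m:=0))" by simp
    moreover have "w m \<in> Rng m Z" using w by (auto simp: Wset_def Rng_def)
    moreover have "w(m:=0) \<in> Wset m Z" using w unfolding Wset_def
      by (auto simp: less_Suc_eq)
    ultimately show "w \<in> (\<lambda>(a,w). w(m:=a)) ` (Rng m Z \<times> Wset m Z)" by blast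
  qed
next
  show "(\<lambda>(a,w). w(m:=a)) ` (Rng m Z \<times> Wset m Z) \<subseteq> Wset (Suc m) Z"
    by (auto simp: Wset_def Rng_def less_Suc_eq split: if_splits)
qed

lemma Wset_Suc_inj: "inj_on (\<lambda>(a,w). w(m:=a)) (Rng m Z \<times> Wset m Z)"
proof (rule inj_onI, clarsimp)
  fix a w b w'
  assume "w \<in> Wset m Z" "w' \<in> Wset m Z" and eq: "w(m := a) = w'(m := b)"
  then have "w m = 0" "w' m = 0" by (auto simp: Wset_def)
  have "a = b" using fun_cong[OF eq, of m] by simp
  moreover have "w = w'"
  proof
    fix i show "w i = w' i"
      using fun_cong[OF eq, of i] \<open>w m = 0\<close> \<open>w' m = 0\<close> by (cases "i = m") auto
  qed
  ultimately show "a = b \<and> w = w'" by simp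
qed

lemma sum_Wset_Suc:
  "(\<Sum>w\<in>Wset (Suc m) Z. g w) = (\<Sum>a\<in>Rng m Z. \<Sum>w\<in>Wset m Z. g (w(m:=a)))"
  unfolding Wset_Suc by (subst sum.reindex[OF Wset_Suc_inj]) (simp add: sum.cartesian_product split_def)

lemma Wset_0: "Wset 0 Z = {\<lambda>_. 0}"
  by (auto simp: Wset_def)

lemma finite_Wset: "finite (Wset m Z)"
proof (induction m)
  case 0 then show ?case by (simp add: Wset_0)
next
  case (Suc m) then show ?case by (simp add: Wset_Suc Rng_def)
qed

lemma prod_sum_Wset:
  fixes h :: "nat \<Rightarrow> int \<Rightarrow> 'b::comm_semiring_1"
  shows "(\<Sum>w\<in>Wset m Z. \<Prod>i<m. h i (w i)) = (\<Prod>i<m. \<Sum>a\<in>Rng i Z. h i a)"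
proof (induction m)
  case 0 then show ?case by (simp add: Wset_0)
next
  case (Suc m)
  have "(\<Sum>w\<in>Wset (Suc m) Z. \<Prod>i<Suc m. h i (w i))
      = (\<Sum>a\<in>Rng m Z. \<Sum>w\<in>Wset m Z. \<Prod>i<Suc m. h i ((w(m:=a)) i))"
    by (rule sum_Wset_Suc)
  also have "\<dots> = (\<Sum>a\<in>Rng m Z. \<Sum>w\<in>Wset m Z. h m a * (\<Prod>i<m. h i (w i)))"
  proof -
    have "\<And>a w. (\<Prod>i<Suc m. h i ((w(m:=a)) i)) = h m a * (\<Prod>i<m. h i (w i))"
      by (simp add: lessThan_Suc mult.commute)
    then show ?thesis by simp
  qed
  also have "\<dots> = (\<Sum>a\<in>Rng m Z. h m a) * (\<Sum>w\<in>Wset m Z. \<Prod>i<m. h i (w i))"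
    by (simp add: sum_product)
  also have "\<dots> = (\<Prod>i<Suc m. \<Sum>a\<in>Rng i Z. h i a)"
    using Suc by (simp add: lessThan_Suc mult.commute)
  finally show ?case .
qed

lemma card_F3vec: "card (F3vec n) = 3 ^ n"
proof -
  have "int (card (F3vec n)) = (\<Sum>w\<in>Wset n {}. \<Prod>i<n. (\<lambda>i a. 1::int) i (w i))"
    by (simp add: F3vec_Wset)
  also have "\<dots> = 3 ^ n" by (subst prod_sum_Wset) (simp add: Rng_def)
  finally show ?thesis by simp
qed

lemma finite_F3vec: "finite (F3vec n)"
  by (simp add: F3vec_Wset finite_Wset)


lemma prod_list_map_pow:
  fixes w :: "nat \<Rightarrow> int"
  assumes "set ks \<subseteq> {..<m}"
  shows "prod_list (map w ks) = (\<Prod>i<m. w i ^ count_list ks i)"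
  using assms
proof (induction ks)
  case Nil then show ?case by simp
next
  case (Cons k ks)
  then have k: "k < m" by simp
  have "(\<Prod>i<m. w i ^ count_list (k#ks) i) = (\<Prod>i<m. (if k = i then w i else 1) * w i ^ count_list ks i)"
    by (intro prod.cong) auto
  also have "\<dots> = (\<Prod>i<m. if k = i then w i else 1) * (\<Prod>i<m. w i ^ count_list ks i)"
    by (rule prod.distrib)
  also have "(\<Prod>i<m. if k = i then w i else 1) = (\<Prod>i<m. if i = k then w k else 1)"
    by (rule prod.cong) auto
  also have "\<dots> = w k" using k by (subst prod.delta[OF finite_lessThan]) simp
  finally show ?case using Cons by simp
qed

lemma pow2_mod3: "(2::int)^e mod 3 = (if even e then 1 else 2)"
proof (induction e)
  case 0 then show ?case by simp
next
  case (Suc e)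
  have "(2::int)^Suc e mod 3 = (2 * (2^e mod 3)) mod 3" by (simp add: mod_mult_right_eq)
  then show ?case using Suc by (cases "even e") simp_all
qed

lemma sigma_nondvd:
  assumes A: "\<not> (3::int) dvd (\<Sum>a\<in>A. a ^ e)" and AA: "A = {0,1,2::int}"
  shows "2 \<le> e"
proof (rule ccontr)
  have assms: "\<not> (3::int) dvd (\<Sum>a\<in>{0,1,2::int}. a ^ e)" using A unfolding AA .
  assume "\<not> 2 \<le> e"
  then have "e = 0 \<or> e = 1" by auto
  then show False using assms by auto
qed

lemma sigma_nondvd_odd:
  assumes "\<not> (3::int) dvd (\<Sum>a\<in>{0,1,2::int}. a ^ e)"
  shows "even e"
proof (rule ccontr)
  assume o: "odd e"
  then have "e > 0" by (cases e) auto
  then have "(\<Sum>a\<in>{0,1,2::int}. a ^ e) = 1 + 2^e" by (simp add: zero_power)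
  moreover have "(1 + 2^e) mod (3::int) = 0" using pow2_mod3[of e] o by (simp add: mod_add_right_eq[symmetric])
  then have "(3::int) dvd (1 + 2^e)" by presburger
  ultimately show False using assms \<open>e > 0\<close> by (simp add: zero_power)
qed

lemma mono_sum_dvd3:
  assumes Z: "Z \<subseteq> {..<m}" and ks: "set ks \<subseteq> {..<m}" and len: "length ks < 2 * (m - card Z)"
  shows "(3::int) dvd (\<Sum>w\<in>Wset m Z. prod_list (map w ks))"
proof -
  let ?e = "count_list ks"
  have "(\<Sum>w\<in>Wset m Z. prod_list (map w ks)) = (\<Sum>w\<in>Wset m Z. \<Prod>i<m. (\<lambda>i a. a ^ ?e i) i (w i))"
    by (intro sum.cong refl) (simp add: prod_list_map_pow[OF ks])
  also have "\<dots> = (\<Prod>i<m. \<Sum>a\<in>Rng i Z. a ^ ?e i)" by (rule prod_sum_Wset)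
  finally have eq: "(\<Sum>w\<in>Wset m Z. prod_list (map w ks)) = (\<Prod>i<m. \<Sum>a\<in>Rng i Z. a ^ ?e i)" .
  have "\<exists>i<m. (3::int) dvd (\<Sum>a\<in>Rng i Z. a ^ ?e i)"
  proof (rule ccontr)
    assume H: "\<not> ?thesis"
    have ge: "2 \<le> ?e i" if "i < m" "i \<notin> Z" for i
    proof -
      have "\<not> (3::int) dvd (\<Sum>a\<in>Rng i Z. a ^ ?e i)" using H that by blast
      moreover have "Rng i Z = {0,1,2}" using that by (simp add: Rng_def)
      ultimately show ?thesis by (rule sigma_nondvd)
    qed
    have "(\<Sum>i\<in>{..<m} - Z. (2::nat)) \<le> (\<Sum>i\<in>{..<m} - Z. ?e i)"
      by (rule sum_mono) (simp add: ge)
    also have "\<dots> \<le> (\<Sum>i\<in>{..<m}. ?e i)" by (rule sum_mono2) auto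
    also have "\<dots> = length ks" by (rule sum_count_set[OF ks]) simp
    finally have A: "2 * card ({..<m} - Z) \<le> length ks" by simp
    have B: "card ({..<m} - Z) = m - card Z" using Z by (simp add: card_Diff_subset finite_subset)
    show False using A B len by simp
  qed
  then obtain i where i: "i < m" and d3: "(3::int) dvd (\<Sum>a\<in>Rng i Z. a ^ ?e i)" by blast
  have "(\<Sum>a\<in>Rng i Z. a ^ ?e i) dvd (\<Prod>i<m. \<Sum>a\<in>Rng i Z. a ^ ?e i)"
    by (rule dvd_prodI) (use i in auto)
  with d3 have "(3::int) dvd (\<Prod>i<m. \<Sum>a\<in>Rng i Z. a ^ ?e i)" by (rule dvd_trans)
  then show ?thesis using eq by simp
qed


definition Qf :: "nat \<Rightarrow> (nat \<Rightarrow> int) \<Rightarrow> (nat \<Rightarrow> int) \<Rightarrow> int" where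
  "Qf n1 c w = (\<Sum>i<n1. c i * (w i)^2)"

definition YZ :: "nat \<Rightarrow> nat \<Rightarrow> (nat \<Rightarrow> int) \<Rightarrow> int" where
  "YZ n1 n2 w = (\<Sum>i<n2. w (n1 + i) * w (n1 + n2 + i))"

definition zzero :: "nat \<Rightarrow> nat \<Rightarrow> (nat \<Rightarrow> int) \<Rightarrow> bool" where
  "zzero n1 n2 w \<longleftrightarrow> (\<forall>i<n2. w (n1 + n2 + i) = 0)"

definition Pf :: "nat \<Rightarrow> nat \<Rightarrow> (nat \<Rightarrow> int) \<Rightarrow> (nat \<Rightarrow> int) \<Rightarrow> (nat \<Rightarrow> int) \<Rightarrow> int" where
  "Pf n1 n2 u v w = (if zzero n1 n2 w then Qf n1 u w else Qf n1 v w) + YZ n1 n2 w"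

lemma fF_Pf: "fF n1 n2 u v w = Pf n1 n2 u v w mod 3"
  unfolding fF_def Pf_def Qf_def YZ_def zzero_def by simp

lemma dsum_dvd3:
  assumes Z: "Z \<subseteq> {..<m}" and fin: "finite A" "finite B"
    and ks: "\<And>a b. a \<in> A \<Longrightarrow> b \<in> B \<Longrightarrow> set (ks a b) \<subseteq> {..<m} \<and> length (ks a b) < 2 * (m - card Z)"
  shows "(3::int) dvd (\<Sum>w\<in>Wset m Z. \<Sum>a\<in>A. \<Sum>b\<in>B. c a b * prod_list (map w (ks a b)))"
proof -
  have "(\<Sum>w\<in>Wset m Z. \<Sum>a\<in>A. \<Sum>b\<in>B. c a b * prod_list (map w (ks a b)))
      = (\<Sum>a\<in>A. \<Sum>b\<in>B. c a b * (\<Sum>w\<in>Wset m Z. prod_list (map w (ks a b))))"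
    by (simp add: sum.swap[of _ "Wset m Z"] sum_distrib_left)
  also have "(3::int) dvd \<dots>"
    by (intro dvd_sum dvd_mult mono_sum_dvd3[OF Z]) (use ks in auto)
  finally show ?thesis .
qed

lemma Qsq_expand:
  "(Qf n1 c w)^2 * (w k * w l) = (\<Sum>i<n1. \<Sum>i'<n1. (c i * c i') * prod_list (map w [i,i,i',i',k,l]))"
  unfolding Qf_def power2_eq_square sum_product sum_distrib_right
  by (intro sum.cong refl) (simp add: sum_distrib_left mult_ac)

lemma QYZ_expand:
  "Qf n1 c w * YZ n1 n2 w * (w k * w l) = (\<Sum>i<n1. \<Sum>j<n2. c i * prod_list (map w [i,i,n1+j,n1+n2+j,k,l]))"
  unfolding Qf_def YZ_def power2_eq_square sum_product sum_distrib_right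
  by (intro sum.cong refl) (simp add: sum_distrib_left mult_ac)

lemma YZsq_expand:
  "(YZ n1 n2 w)^2 * (w k * w l) = (\<Sum>j<n2. \<Sum>j'<n2. 1 * prod_list (map w [n1+j,n1+n2+j,n1+j',n1+n2+j',k,l]))"
  unfolding YZ_def power2_eq_square sum_product sum_distrib_right
  by (intro sum.cong refl) (simp add: sum_distrib_left mult_ac)

lemma kl_expand: "w k * w l = (\<Sum>a\<in>{0::nat}. \<Sum>b\<in>{0::nat}. 1 * prod_list (map w [k,l]))"
  by simp


lemma zz_Wset:
  assumes "n1 + 2 * n2 \<le> n"
  shows "{w \<in> F3vec n. zzero n1 n2 w} = Wset n {n1+n2..<n1+2*n2}"
proof -
  have A: "zzero n1 n2 w \<longleftrightarrow> (\<forall>i\<in>{n1+n2..<n1+2*n2}. w i = 0)" for w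
  proof
    assume "zzero n1 n2 w"
    then show "\<forall>i\<in>{n1+n2..<n1+2*n2}. w i = 0"
      unfolding zzero_def by (metis atLeastLessThan_iff le_Suc_ex add_less_cancel_left mult_2 add.assoc)
  next
    assume "\<forall>i\<in>{n1+n2..<n1+2*n2}. w i = 0"
    then show "zzero n1 n2 w" unfolding zzero_def by auto
  qed
  show ?thesis using assms unfolding F3vec_Wset Wset_def A by auto
qed

lemma sq_mod3_cases:
  fixes P :: int
  shows "(3 dvd P \<and> 3 dvd P^2) \<or> 3 dvd (1 - P^2)"
proof -
  have pm: "P^2 mod 3 = (P mod 3)^2 mod 3" by (simp add: power_mod)
  have "P mod 3 = 0 \<or> P mod 3 = 1 \<or> P mod 3 = 2" by auto
  then show ?thesis
  proof (elim disjE)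
    assume "P mod 3 = 0"
    then have "3 dvd P" by auto
    then show ?thesis by auto
  next
    assume "P mod 3 = 1"
    then have "(1::int) mod 3 = P^2 mod 3" using pm by simp
    then have "3 dvd (1 - P^2)" by (simp only: mod_eq_dvd_iff)
    then show ?thesis by simp
  next
    assume "P mod 3 = 2"
    then have "(1::int) mod 3 = P^2 mod 3" using pm by simp
    then have "3 dvd (1 - P^2)" by (simp only: mod_eq_dvd_iff)
    then show ?thesis by simp
  qed
qed

lemma S_dvd:
  assumes n: "n = n1 + 2*n2 + s" and n4: "4 \<le> n" and cond: "4 \<le> n1 + n2 + s \<or> n1 = 1"
    and kl: "k < n" "l < n"
    and u: "\<forall>i<n1. u i \<in> {1,2}" and v: "\<forall>i<n1. v i \<in> {1,2}"
  shows "(3::int) dvd (\<Sum>w\<in>Dzero n (fF n1 n2 u v). w k * w l)"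
proof -
  let ?g = "\<lambda>w::nat\<Rightarrow>int. w k * w l"
  let ?P = "Pf n1 n2 u v"
  let ?V = "F3vec n"
  let ?Zz = "{n1+n2..<n1+2*n2}"
  have finV: "finite ?V" by (rule finite_F3vec)
  have e1: "(\<Sum>w\<in>Dzero n (fF n1 n2 u v). ?g w) = (\<Sum>w\<in>?V. if ?P w mod 3 = 0 then ?g w else 0)"
    unfolding Dzero_def fF_Pf by (simp add: sum.inter_filter[OF finV])
  have d2: "(3::int) dvd ((\<Sum>w\<in>?V. if ?P w mod 3 = 0 then ?g w else 0) - (\<Sum>w\<in>?V. (1 - (?P w)^2) * ?g w))"
  proof -
    have "\<And>w. (3::int) dvd ((if ?P w mod 3 = 0 then ?g w else 0) - (1 - (?P w)^2) * ?g w)"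
    proof -
      fix w
      show "(3::int) dvd ((if ?P w mod 3 = 0 then ?g w else 0) - (1 - (?P w)^2) * ?g w)"
        using sq_mod3_cases[of "?P w"]
      proof
        assume A: "3 dvd ?P w \<and> 3 dvd (?P w)^2"
        then have "?P w mod 3 = 0" by simp
        then have "(if ?P w mod 3 = 0 then ?g w else 0) - (1 - (?P w)^2) * ?g w = (?P w)^2 * ?g w"
          by (simp add: algebra_simps)
        then show ?thesis using A by (simp add: dvd_mult2)
      next
        assume h: "3 dvd (1 - (?P w)^2)"
        show ?thesis
        proof (cases "?P w mod 3 = 0")
          case True
          then have "3 dvd ?P w" by auto
          then have "3 dvd (?P w)^2" by auto
          from dvd_add[OF h this] have "3 dvd (1::int)" by simp
          then show ?thesis by simp
        next
          case False
          then show ?thesis using h by simp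
        qed
      qed
    qed
    then have "(3::int) dvd (\<Sum>w\<in>?V. (if ?P w mod 3 = 0 then ?g w else 0) - (1 - (?P w)^2) * ?g w)"
      by (rule dvd_sum)
    then show ?thesis by (simp add: sum_subtractf)
  qed
  have pw: "(1 - (?P w)^2) * ?g w = ?g w - (Qf n1 v w + YZ n1 n2 w)^2 * ?g w
            - (if zzero n1 n2 w then ((Qf n1 u w)^2 - (Qf n1 v w)^2) * ?g w else 0)" for w
  proof (cases "zzero n1 n2 w")
    case True
    then have "YZ n1 n2 w = 0" unfolding YZ_def zzero_def by simp
    then show ?thesis using True unfolding Pf_def by (simp add: algebra_simps)
  next
    case False
    then show ?thesis unfolding Pf_def by (simp add: algebra_simps)
  qed
  have e3: "(\<Sum>w\<in>?V. (1 - (?P w)^2) * ?g w) = (\<Sum>w\<in>?V. ?g w) - (\<Sum>w\<in>?V. (Qf n1 v w + YZ n1 n2 w)^2 * ?g w)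
      - (\<Sum>w\<in>Wset n ?Zz. ((Qf n1 u w)^2 - (Qf n1 v w)^2) * ?g w)"
  proof -
    have "(\<Sum>w\<in>?V. (if zzero n1 n2 w then ((Qf n1 u w)^2 - (Qf n1 v w)^2) * ?g w else 0))
       = (\<Sum>w\<in>{w \<in> ?V. zzero n1 n2 w}. ((Qf n1 u w)^2 - (Qf n1 v w)^2) * ?g w)"
      by (simp add: sum.inter_filter[OF finV])
    also have "{w \<in> ?V. zzero n1 n2 w} = Wset n ?Zz" using zz_Wset n by simp
    finally show ?thesis by (simp add: pw sum_subtractf)
  qed
  have kls: "set [k,l] \<subseteq> {..<n}" using kl by simp
  have t1: "(3::int) dvd (\<Sum>w\<in>?V. ?g w)"
  proof -
    have "(\<Sum>w\<in>?V. ?g w) = (\<Sum>w\<in>Wset n {}. \<Sum>a\<in>{0::nat}. \<Sum>b\<in>{0::nat}. 1 * prod_list (map w [k,l]))"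
      by (simp add: F3vec_Wset)
    also have "(3::int) dvd \<dots>" by (rule dsum_dvd3) (use kl n4 in auto)
    finally show ?thesis .
  qed
  have t2: "(3::int) dvd (\<Sum>w\<in>?V. (Qf n1 v w + YZ n1 n2 w)^2 * ?g w)"
  proof -
    have "(\<Sum>w\<in>?V. (Qf n1 v w + YZ n1 n2 w)^2 * ?g w)
       = (\<Sum>w\<in>?V. (Qf n1 v w)^2 * ?g w) + 2 * (\<Sum>w\<in>?V. Qf n1 v w * YZ n1 n2 w * ?g w)
         + (\<Sum>w\<in>?V. (YZ n1 n2 w)^2 * ?g w)"
      by (simp add: power2_sum algebra_simps sum.distrib sum_distrib_left)
    moreover have "(3::int) dvd (\<Sum>w\<in>?V. (Qf n1 v w)^2 * ?g w)"
      unfolding Qsq_expand F3vec_Wset by (rule dsum_dvd3) (use kl n4 n in auto)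
    moreover have "(3::int) dvd (\<Sum>w\<in>?V. Qf n1 v w * YZ n1 n2 w * ?g w)"
      unfolding QYZ_expand F3vec_Wset by (rule dsum_dvd3) (use kl n4 n in auto)
    moreover have "(3::int) dvd (\<Sum>w\<in>?V. (YZ n1 n2 w)^2 * ?g w)"
      unfolding YZsq_expand F3vec_Wset by (rule dsum_dvd3) (use kl n4 n in auto)
    ultimately show ?thesis by simp
  qed
  have t3: "(3::int) dvd (\<Sum>w\<in>Wset n ?Zz. ((Qf n1 u w)^2 - (Qf n1 v w)^2) * ?g w)"
    using cond
  proof
    assume c4: "4 \<le> n1 + n2 + s"
    have Zs: "?Zz \<subseteq> {..<n}" using n by auto
    have cZ: "card ?Zz = n2" by simp
    have "(\<Sum>w\<in>Wset n ?Zz. ((Qf n1 u w)^2 - (Qf n1 v w)^2) * ?g w)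
       = (\<Sum>w\<in>Wset n ?Zz. (Qf n1 u w)^2 * ?g w) - (\<Sum>w\<in>Wset n ?Zz. (Qf n1 v w)^2 * ?g w)"
      by (simp add: left_diff_distrib sum_subtractf)
    moreover have "(3::int) dvd (\<Sum>w\<in>Wset n ?Zz. (Qf n1 u w)^2 * ?g w)"
      unfolding Qsq_expand by (rule dsum_dvd3[OF Zs]) (use kl c4 n cZ in auto)
    moreover have "(3::int) dvd (\<Sum>w\<in>Wset n ?Zz. (Qf n1 v w)^2 * ?g w)"
      unfolding Qsq_expand by (rule dsum_dvd3[OF Zs]) (use kl c4 n cZ in auto)
    ultimately show ?thesis by simp
  next
    assume n1: "n1 = 1"
    have u0: "u 0 = 1 \<or> u 0 = 2" using u n1 by auto
    have v0: "v 0 = 1 \<or> v 0 = 2" using v n1 by auto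
    have d: "(3::int) dvd ((u 0)^2 - (v 0)^2)" using u0 v0 by (elim disjE) simp_all
    have "(3::int) dvd (((Qf n1 u w)^2 - (Qf n1 v w)^2) * ?g w)" for w
    proof -
      have eq: "((Qf n1 u w)^2 - (Qf n1 v w)^2) * ?g w = ((u 0)^2 - (v 0)^2) * ((w 0 * w 0 * w 0 * w 0) * ?g w)"
        by (simp add: Qf_def n1) (simp add: algebra_simps power2_eq_square)
      show ?thesis unfolding eq by (rule dvd_mult2[OF d])
    qed
    then show ?thesis by (rule dvd_sum)
  qed
  have "(3::int) dvd (\<Sum>w\<in>?V. (1 - (?P w)^2) * ?g w)"
    unfolding e3 using t1 t2 t3 by simp
  from dvd_add[OF d2 this] have "(3::int) dvd (\<Sum>w\<in>?V. if ?P w mod 3 = 0 then ?g w else 0)"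
    by simp
  then show ?thesis using e1 by simp
qed


lemma xi3_eq: "xi3 = Complex (-1/2) (sqrt 3 / 2)"
  unfolding xi3_def by (simp add: complex_eq_iff cos_120 sin_120)

lemma xi3_sq: "xi3^2 = Complex (-1/2) (- sqrt 3 / 2)"
  unfolding xi3_eq by (simp add: complex_eq_iff power2_eq_square)

lemma xi3_cube: "xi3^3 = 1"
proof -
  have "xi3^3 = xi3^2 * xi3" by (simp add: power3_eq_cube power2_eq_square)
  also have "\<dots> = 1" by (simp only: xi3_sq) (simp add: xi3_eq complex_eq_iff)
  finally show ?thesis .
qed

lemma xi3_pow_mod: "xi3 ^ m = xi3 ^ (m mod 3)"
proof -
  have "xi3 ^ m = xi3 ^ (3 * (m div 3) + m mod 3)" by simp
  also have "\<dots> = (xi3^3) ^ (m div 3) * xi3 ^ (m mod 3)" by (simp only: power_add power_mult)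
  finally show ?thesis by (simp add: xi3_cube)
qed

definition e3 :: "int \<Rightarrow> complex" where
  "e3 k = xi3 ^ nat (k mod 3)"

lemma e3_mod: "e3 (k mod 3) = e3 k"
  unfolding e3_def by simp

lemma e3_cong: "a mod 3 = b mod 3 \<Longrightarrow> e3 a = e3 b"
  unfolding e3_def by simp

lemma e3_add: "e3 (a + b) = e3 a * e3 b"
proof -
  have "e3 a * e3 b = xi3 ^ (nat (a mod 3) + nat (b mod 3))"
    unfolding e3_def by (simp add: power_add)
  also have "\<dots> = xi3 ^ ((nat (a mod 3) + nat (b mod 3)) mod 3)" by (rule xi3_pow_mod)
  also have "(nat (a mod 3) + nat (b mod 3)) mod 3 = nat ((a + b) mod 3)"
  proof -
    have "int ((nat (a mod 3) + nat (b mod 3)) mod 3) = (a mod 3 + b mod 3) mod 3"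
      by (simp add: zmod_int)
    also have "\<dots> = (a + b) mod 3" by (simp add: mod_add_eq)
    finally show ?thesis by (metis nat_int)
  qed
  finally show ?thesis unfolding e3_def by simp
qed

lemma e3_0: "e3 0 = 1" unfolding e3_def by simp

lemma e3_sum: "finite A \<Longrightarrow> e3 (\<Sum>i\<in>A. g i) = (\<Prod>i\<in>A. e3 (g i))"
  by (induction A rule: finite_induct) (simp_all add: e3_0 e3_add)

lemma e3_vals: "e3 k = (if k mod 3 = 0 then 1 else if k mod 3 = 1 then xi3 else xi3^2)"
proof -
  have "k mod 3 = 0 \<or> k mod 3 = 1 \<or> k mod 3 = 2" by auto
  then show ?thesis unfolding e3_def by auto
qed

lemma Re_e3: "Re (e3 k) = (if k mod 3 = 0 then 1 else -1/2)"
  by (simp only: e3_vals xi3_sq) (simp add: xi3_eq)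

lemma Im_e3_0: "Im (e3 k) = 0 \<longleftrightarrow> k mod 3 = 0"
  by (simp only: e3_vals xi3_sq) (simp add: xi3_eq)

lemma Re_1_2e3: "k mod 3 \<noteq> 0 \<Longrightarrow> Re (1 + 2 * e3 k) = 0"
  by (simp add: Re_e3)

lemma prod_parity:
  fixes g :: "nat \<Rightarrow> complex"
  assumes "\<And>i. i < m \<Longrightarrow> Re (g i) = 0"
  shows "(even m \<longrightarrow> Im (\<Prod>i<m. g i) = 0) \<and> (odd m \<longrightarrow> Re (\<Prod>i<m. g i) = 0)"
  using assms
proof (induction m)
  case 0 then show ?case by simp
next
  case (Suc m)
  then have IH: "(even m \<longrightarrow> Im (\<Prod>i<m. g i) = 0) \<and> (odd m \<longrightarrow> Re (\<Prod>i<m. g i) = 0)"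
    and gm: "Re (g m) = 0" by auto
  show ?case using IH gm by (cases "even m") (simp_all add: lessThan_Suc)
qed


lemma walsh0: "walsh n f (\<lambda>_. 0) = (\<Sum>w\<in>F3vec n. e3 (f w))"
  unfolding walsh_def dot3_def e3_def by simp

definition jz :: "nat \<Rightarrow> nat \<Rightarrow> (nat \<Rightarrow> int) \<Rightarrow> nat" where
  "jz n1 n2 w = (LEAST j. j < n2 \<and> w (n1 + n2 + j) \<noteq> 0)"

definition tau :: "nat \<Rightarrow> nat \<Rightarrow> int \<Rightarrow> (nat \<Rightarrow> int) \<Rightarrow> (nat \<Rightarrow> int)" where
  "tau n1 n2 sg w = w(n1 + jz n1 n2 w := (w (n1 + jz n1 n2 w) + sg * w (n1 + n2 + jz n1 n2 w)) mod 3)"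

lemma jz_prop:
  assumes "\<not> zzero n1 n2 w"
  shows "jz n1 n2 w < n2 \<and> w (n1 + n2 + jz n1 n2 w) \<noteq> 0"
proof -
  from assms obtain j where "j < n2 \<and> w (n1 + n2 + j) \<noteq> 0" unfolding zzero_def by auto
  then show ?thesis unfolding jz_def by (rule LeastI)
qed

lemma jz_upd:
  assumes "p < n1 + n2"
  shows "jz n1 n2 (w(p := a)) = jz n1 n2 w"
proof -
  have "(\<lambda>j. j < n2 \<and> (w(p := a)) (n1 + n2 + j) \<noteq> 0) = (\<lambda>j. j < n2 \<and> w (n1 + n2 + j) \<noteq> 0)"
    using assms by (auto simp: fun_eq_iff)
  then show ?thesis unfolding jz_def by simp
qed

lemma zzero_upd:
  assumes "p < n1 + n2"
  shows "zzero n1 n2 (w(p := a)) = zzero n1 n2 w"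
  using assms unfolding zzero_def by auto

lemma YZ_upd:
  assumes "j < n2"
  shows "YZ n1 n2 (w(n1 + j := a)) = YZ n1 n2 w + (a - w (n1 + j)) * w (n1 + n2 + j)"
proof -
  have "\<And>i. i < n2 \<Longrightarrow> (w(n1 + j := a)) (n1 + i) * (w(n1 + j := a)) (n1 + n2 + i)
      = w (n1 + i) * w (n1 + n2 + i) + (if i = j then (a - w (n1 + j)) * w (n1 + n2 + j) else 0)"
    using assms by (auto simp: algebra_simps)
  then have "YZ n1 n2 (w(n1 + j := a)) = (\<Sum>i<n2. w (n1 + i) * w (n1 + n2 + i) + (if i = j then (a - w (n1 + j)) * w (n1 + n2 + j) else 0))"
    unfolding YZ_def by (intro sum.cong) auto
  also have "\<dots> = YZ n1 n2 w + (a - w (n1 + j)) * w (n1 + n2 + j)"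
    using assms by (simp add: sum.distrib YZ_def)
  finally show ?thesis .
qed

lemma Qf_upd:
  assumes "n1 \<le> p"
  shows "Qf n1 c (w(p := a)) = Qf n1 c w"
  using assms unfolding Qf_def by (intro sum.cong) auto

lemma step_mod3:
  fixes y z :: int
  assumes "y \<in> {0,1,2}" "z \<in> {1,2}"
  shows "(((y + z) mod 3 - y) * z) mod 3 = 1"
  using assms by auto

lemma inv_mod3:
  fixes y z :: int
  assumes "y \<in> {0,1,2}" "z \<in> {1,2}"
  shows "((y + z) mod 3 + (-1) * z) mod 3 = y"
  using assms by auto

lemma partB:
  assumes n: "n = n1 + 2 * n2 + s"
  shows "(\<Sum>w\<in>{w \<in> F3vec n. \<not> zzero n1 n2 w}. e3 (Pf n1 n2 u v w)) = 0"
proof -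
  let ?B = "{w \<in> F3vec n. \<not> zzero n1 n2 w}"
  let ?S = "(\<Sum>w\<in>?B. e3 (Pf n1 n2 u v w))"
  have props: "jz n1 n2 w < n2 \<and> w (n1 + n2 + jz n1 n2 w) \<in> {1,2} \<and> w (n1 + jz n1 n2 w) \<in> {0,1,2}"
    if "w \<in> ?B" for w
  proof -
    have j: "jz n1 n2 w < n2" "w (n1 + n2 + jz n1 n2 w) \<noteq> 0" using jz_prop that by auto
    have "w (n1 + n2 + jz n1 n2 w) \<in> {0,1,2}" "w (n1 + jz n1 n2 w) \<in> {0,1,2}"
      using that j n unfolding F3vec_def by auto
    then show ?thesis using j by auto
  qed
  have tauB: "tau n1 n2 sg w \<in> ?B" if "w \<in> ?B" for w sg
  proof -
    have j: "jz n1 n2 w < n2" using props that by auto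
    have "tau n1 n2 sg w \<in> F3vec n" using that j n unfolding F3vec_def tau_def by auto
    moreover have "\<not> zzero n1 n2 (tau n1 n2 sg w)"
      unfolding tau_def using zzero_upd[of "n1 + jz n1 n2 w" n1 n2] j that by simp
    ultimately show ?thesis by simp
  qed
  have jz_tau: "jz n1 n2 (tau n1 n2 sg w) = jz n1 n2 w" if "w \<in> ?B" for w sg
    unfolding tau_def using jz_upd props that by simp
  have inv: "tau n1 n2 (-1) (tau n1 n2 1 w) = w" if "w \<in> ?B" for w
  proof -
    let ?j = "jz n1 n2 w"
    have p: "?j < n2" "w (n1 + n2 + ?j) \<in> {1,2}" "w (n1 + ?j) \<in> {0,1,2}" using props that by auto
    have "tau n1 n2 (-1) (tau n1 n2 1 w) = w(n1 + ?j := ((w (n1 + ?j) + w (n1 + n2 + ?j)) mod 3 + (-1) * w (n1 + n2 + ?j)) mod 3)"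
      using jz_tau[OF that, of 1] p(1) unfolding tau_def by (simp add: fun_eq_iff)
    also have "\<dots> = w" using inv_mod3[OF p(3) p(2)] by simp
    finally show ?thesis .
  qed
  have inv2: "tau n1 n2 1 (tau n1 n2 (-1) w) = w" if "w \<in> ?B" for w
  proof -
    let ?j = "jz n1 n2 w"
    have p: "?j < n2" "w (n1 + n2 + ?j) \<in> {1,2}" "w (n1 + ?j) \<in> {0,1,2}" using props that by auto
    have "tau n1 n2 1 (tau n1 n2 (-1) w) = w(n1 + ?j := ((w (n1 + ?j) + (-1) * w (n1 + n2 + ?j)) mod 3 + 1 * w (n1 + n2 + ?j)) mod 3)"
      using jz_tau[OF that, of "-1"] p(1) unfolding tau_def by (simp add: fun_eq_iff)
    also have "\<dots> = w" using p(2,3) by auto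
    finally show ?thesis .
  qed
  have shift: "e3 (Pf n1 n2 u v (tau n1 n2 1 w)) = e3 (Pf n1 n2 u v w) * xi3" if "w \<in> ?B" for w
  proof -
    let ?j = "jz n1 n2 w"
    let ?a = "(w (n1 + ?j) + 1 * w (n1 + n2 + ?j)) mod 3"
    have p: "?j < n2" "w (n1 + n2 + ?j) \<in> {1,2}" "w (n1 + ?j) \<in> {0,1,2}" using props that by auto
    have nz: "\<not> zzero n1 n2 w" "\<not> zzero n1 n2 (tau n1 n2 1 w)" using that tauB[OF that] by auto
    have "Pf n1 n2 u v (tau n1 n2 1 w) = Qf n1 v w + YZ n1 n2 w + (?a - w (n1 + ?j)) * w (n1 + n2 + ?j)"
      using nz p(1) unfolding Pf_def tau_def by (simp add: Qf_upd YZ_upd)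
    also have "\<dots> = Pf n1 n2 u v w + (?a - w (n1 + ?j)) * w (n1 + n2 + ?j)"
      using nz unfolding Pf_def by simp
    finally have "e3 (Pf n1 n2 u v (tau n1 n2 1 w)) = e3 (Pf n1 n2 u v w) * e3 ((?a - w (n1 + ?j)) * w (n1 + n2 + ?j))"
      by (simp add: e3_add)
    also have "e3 ((?a - w (n1 + ?j)) * w (n1 + n2 + ?j)) = e3 1"
      using step_mod3[OF p(3) p(2)] by (intro e3_cong) simp
    also have "e3 1 = xi3" unfolding e3_def by simp
    finally show ?thesis .
  qed
  have "?S = (\<Sum>w\<in>?B. e3 (Pf n1 n2 u v (tau n1 n2 1 w)))"
    by (rule sum.reindex_bij_witness[where i = "tau n1 n2 1" and j = "tau n1 n2 (-1)"])
       (use inv inv2 tauB in auto)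
  also have "\<dots> = ?S * xi3" using shift by (simp add: sum_distrib_right)
  finally have "?S * (1 - xi3) = 0" by (simp add: algebra_simps)
  moreover have "xi3 \<noteq> 1" by (simp add: xi3_eq complex_eq_iff)
  ultimately show ?thesis by simp
qed


lemma prod_split_at:
  fixes n1 n :: nat
  assumes "n1 \<le> n"
  shows "(\<Prod>i<n. g i) = (\<Prod>i<n1. g i) * (\<Prod>i\<in>{n1..<n}. g i)"
proof -
  have A: "{..<n} = {..<n1} \<union> {n1..<n}" using assms by auto
  have "prod g ({..<n1} \<union> {n1..<n}) = prod g {..<n1} * prod g {n1..<n}"
    by (rule prod.union_disjoint) auto
  then show ?thesis using A by simp
qed

lemma partA:
  assumes n: "n = n1 + 2 * n2 + s" and u: "\<forall>i<n1. u i \<in> {1,2}"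
  shows "\<exists>P R. (\<Sum>w\<in>{w \<in> F3vec n. zzero n1 n2 w}. e3 (Pf n1 n2 u v w)) = P * complex_of_real R
           \<and> (even n1 \<longrightarrow> Im P = 0) \<and> (odd n1 \<longrightarrow> Re P = 0)"
proof -
  let ?Zz = "{n1+n2..<n1+2*n2}"
  define h where "h i a = (if i < n1 then e3 (u i * a^2) else 1)" for i a
  have eqZ: "{w \<in> F3vec n. zzero n1 n2 w} = Wset n ?Zz" using zz_Wset n by simp
  have pt: "e3 (Pf n1 n2 u v w) = (\<Prod>i<n. h i (w i))" if "w \<in> Wset n ?Zz" for w
  proof -
    have zz: "zzero n1 n2 w" using that eqZ by auto
    then have "YZ n1 n2 w = 0" unfolding YZ_def zzero_def by simp
    then have "Pf n1 n2 u v w = (\<Sum>i<n1. u i * (w i)^2)" using zz unfolding Pf_def Qf_def by simp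
    then have "e3 (Pf n1 n2 u v w) = (\<Prod>i<n1. e3 (u i * (w i)^2))" by (simp add: e3_sum)
    also have "\<dots> = (\<Prod>i<n1. h i (w i))" unfolding h_def by simp
    also have "\<dots> = (\<Prod>i<n. h i (w i))"
      using prod_split_at[of n1 n "\<lambda>i. h i (w i)"] n unfolding h_def by simp
    finally show ?thesis .
  qed
  have "(\<Sum>w\<in>{w \<in> F3vec n. zzero n1 n2 w}. e3 (Pf n1 n2 u v w)) = (\<Sum>w\<in>Wset n ?Zz. \<Prod>i<n. h i (w i))"
    unfolding eqZ using pt by simp
  also have "\<dots> = (\<Prod>i<n. \<Sum>a\<in>Rng i ?Zz. h i a)" by (rule prod_sum_Wset)
  also have "\<dots> = (\<Prod>i<n1. \<Sum>a\<in>Rng i ?Zz. h i a) * (\<Prod>i\<in>{n1..<n}. \<Sum>a\<in>Rng i ?Zz. h i a)"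
    using n by (intro prod_split_at) simp
  also have "(\<Prod>i\<in>{n1..<n}. \<Sum>a\<in>Rng i ?Zz. h i a) = complex_of_real (\<Prod>i\<in>{n1..<n}. real (card (Rng i ?Zz)))"
    unfolding h_def by simp
  finally have eq: "(\<Sum>w\<in>{w \<in> F3vec n. zzero n1 n2 w}. e3 (Pf n1 n2 u v w))
     = (\<Prod>i<n1. \<Sum>a\<in>Rng i ?Zz. h i a) * complex_of_real (\<Prod>i\<in>{n1..<n}. real (card (Rng i ?Zz)))" .
  have re0: "Re (\<Sum>a\<in>Rng i ?Zz. h i a) = 0" if "i < n1" for i
  proof -
    have R: "Rng i ?Zz = {0,1,2}" using that by (simp add: Rng_def)
    have ui: "u i = 1 \<or> u i = 2" using u that by auto
    have "e3 (u i * 4) = e3 (u i)" using ui by (intro e3_cong) auto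
    then have "(\<Sum>a\<in>Rng i ?Zz. h i a) = 1 + 2 * e3 (u i)"
      unfolding R h_def using that by (simp add: e3_0)
    moreover have "u i mod 3 \<noteq> 0" using ui by auto
    ultimately show ?thesis using Re_1_2e3 by simp
  qed
  show ?thesis
    using eq prod_parity[of n1 "\<lambda>i. \<Sum>a\<in>Rng i ?Zz. h i a"] re0 by blast
qed

lemma W_props:
  assumes n: "n = n1 + 2 * n2 + s" and u: "\<forall>i<n1. u i \<in> {1,2}"
  shows "(even n1 \<longrightarrow> Im (walsh n (fF n1 n2 u v) (\<lambda>_. 0)) = 0) \<and>
         (odd n1 \<longrightarrow> Re (walsh n (fF n1 n2 u v) (\<lambda>_. 0)) = 0)"
proof -
  let ?V = "F3vec n"
  have finV: "finite ?V" by (rule finite_F3vec)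
  have "walsh n (fF n1 n2 u v) (\<lambda>_. 0) = (\<Sum>w\<in>?V. e3 (Pf n1 n2 u v w))"
    unfolding walsh0 fF_Pf e3_mod by simp
  also have "\<dots> = (\<Sum>w\<in>?V. if zzero n1 n2 w then e3 (Pf n1 n2 u v w) else 0)
                + (\<Sum>w\<in>?V. if \<not> zzero n1 n2 w then e3 (Pf n1 n2 u v w) else 0)"
    by (simp add: sum.distrib[symmetric]) (intro sum.cong refl, auto)
  also have "\<dots> = (\<Sum>w\<in>{w \<in> ?V. zzero n1 n2 w}. e3 (Pf n1 n2 u v w))
                + (\<Sum>w\<in>{w \<in> ?V. \<not> zzero n1 n2 w}. e3 (Pf n1 n2 u v w))"
    by (simp add: sum.inter_filter[OF finV])
  also have "(\<Sum>w\<in>{w \<in> ?V. \<not> zzero n1 n2 w}. e3 (Pf n1 n2 u v w)) = 0"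
    by (rule partB[OF n])
  finally have W: "walsh n (fF n1 n2 u v) (\<lambda>_. 0) = (\<Sum>w\<in>{w \<in> ?V. zzero n1 n2 w}. e3 (Pf n1 n2 u v w))"
    by simp
  obtain P R where PR: "(\<Sum>w\<in>{w \<in> ?V. zzero n1 n2 w}. e3 (Pf n1 n2 u v w)) = P * complex_of_real R"
    "even n1 \<longrightarrow> Im P = 0" "odd n1 \<longrightarrow> Re P = 0"
    using partA[OF n u, of v] by blast
  show ?thesis unfolding W PR(1) using PR(2,3) by simp
qed

lemma Re_walsh_card:
  "2 * Re (walsh n (fF n1 n2 u v) (\<lambda>_. 0)) = 3 * real (card (Dzero n (fF n1 n2 u v))) - 3 ^ n"
proof -
  let ?V = "F3vec n"
  let ?f = "fF n1 n2 u v"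
  have finV: "finite ?V" by (rule finite_F3vec)
  have fm: "?f w mod 3 = ?f w" for w unfolding fF_def by simp
  have "Re (walsh n ?f (\<lambda>_. 0)) = (\<Sum>w\<in>?V. Re (e3 (?f w)))"
    unfolding walsh0 by simp
  also have "\<dots> = (\<Sum>w\<in>?V. 3/2 * (if ?f w = 0 then 1 else 0) - 1/2)"
    by (intro sum.cong refl) (simp add: Re_e3 fm)
  also have "\<dots> = 3/2 * (\<Sum>w\<in>?V. (if ?f w = 0 then 1 else 0)) - 1/2 * real (card ?V)"
    by (simp add: sum_subtractf sum_distrib_left)
  also have "(\<Sum>w\<in>?V. (if ?f w = 0 then 1 else 0)) = real (card (Dzero n ?f))"
    unfolding Dzero_def by (simp add: sum.inter_filter[OF finV, symmetric])
  finally show ?thesis by (simp add: card_F3vec)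
qed


lemma cardD_odd:
  assumes n: "n = n1 + 2 * n2 + s" and u: "\<forall>i<n1. u i \<in> {1,2}" and odd: "odd n1"
  shows "card (Dzero n (fF n1 n2 u v)) = 3 ^ (n - 1)"
proof -
  have "Re (walsh n (fF n1 n2 u v) (\<lambda>_. 0)) = 0" using W_props[OF n u] odd by blast
  then have "3 * real (card (Dzero n (fF n1 n2 u v))) = 3 ^ n" using Re_walsh_card[of n n1 n2 u v] by simp
  then have "3 * card (Dzero n (fF n1 n2 u v)) = 3 ^ n" by (metis of_nat_eq_of_nat_power_cancel_iff of_nat_mult of_nat_numeral)
  moreover have "n \<ge> 1" using odd n by (cases n1) auto
  ultimately show ?thesis by (metis Suc_diff_1 less_le_trans mult_cancel_left power_Suc zero_less_one zero_neq_numeral)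
qed

lemma mu3_even: "even m \<Longrightarrow> mu3 m = 1"
proof -
  assume "even m"
  then obtain k where k: "m = 2 * k" by blast
  have "(3::nat) ^ m = 9 ^ k" unfolding k by (simp add: power_mult)
  moreover have "(9::nat) ^ k mod 4 = 1"
  proof (induction k)
    case 0 then show ?case by simp
  next
    case (Suc k)
    have "(9::nat) ^ Suc k mod 4 = (9 * (9 ^ k mod 4)) mod 4" by (simp add: mod_mult_right_eq)
    then show ?case using Suc by simp
  qed
  ultimately show "mu3 m = 1" unfolding mu3_def by simp
qed

lemma cardD_even:
  assumes n: "n = n1 + 2 * n2 + s" and u: "\<forall>i<n1. u i \<in> {1,2}" and ev: "even n1"
    and ty: "is_type n s (fF n1 n2 u v) eps0"
  shows "3 * int (card (Dzero n (fF n1 n2 u v))) = 3 ^ n + 2 * eps0 * 3 ^ ((n + s) div 2)"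
proof -
  let ?W = "walsh n (fF n1 n2 u v) (\<lambda>_. 0)"
  let ?h = "(n + s) div 2"
  have evs: "even (n + s)" using n ev by simp
  have imW: "Im ?W = 0" using W_props[OF n u] ev by blast
  from ty obtain c where e: "eps0 \<in> {1, -1}" and c: "c \<in> {0,1,2::nat}"
    and Wc: "?W = of_int eps0 * mu3 (n + s) * complex_of_real (3 powr (real (n + s) / 2)) * xi3 ^ c"
    unfolding is_type_def by blast
  have "real (n + s) / 2 = real ?h" using evs by (simp add: real_of_nat_div)
  then have pw: "(3::real) powr (real (n + s) / 2) = 3 ^ ?h" by (simp add: powr_realpow)
  have W2: "?W = complex_of_real (real_of_int eps0 * 3 ^ ?h) * xi3 ^ c"
    using Wc pw mu3_even[OF evs] by simp
  have epsnz: "real_of_int eps0 * 3 ^ ?h \<noteq> 0" using e by auto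
  have "Im (xi3 ^ c) = 0"
    using imW epsnz unfolding W2 by simp
  then have c0: "c = 0"
  proof -
    assume im: "Im (xi3 ^ c) = 0"
    have "c = 0 \<or> c = 1 \<or> c = 2" using c by auto
    moreover have "c \<noteq> 1" using im by (auto simp: xi3_eq)
    moreover have "c \<noteq> 2" using im by (auto simp only: xi3_sq) (simp)
    ultimately show "c = 0" by blast
  qed
  then have "Re ?W = real_of_int eps0 * 3 ^ ?h" unfolding W2 by simp
  then have "3 * real (card (Dzero n (fF n1 n2 u v))) - 3 ^ n = 2 * (real_of_int eps0 * 3 ^ ?h)"
    using Re_walsh_card[of n n1 n2 u v] by simp
  then have "real_of_int (3 * int (card (Dzero n (fF n1 n2 u v)))) = real_of_int (3 ^ n + 2 * eps0 * 3 ^ ?h)"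
    by simp
  then show ?thesis by (simp only: of_int_eq_iff)
qed


lemma F3vec_vals: "w \<in> F3vec n \<Longrightarrow> w k \<in> {0,1,2}"
  unfolding F3vec_def by (cases "k < n") auto

lemma sum_mod_cong:
  fixes g h :: "'a \<Rightarrow> int"
  assumes "\<And>i. i \<in> A \<Longrightarrow> g i mod 3 = h i mod 3"
  shows "(\<Sum>i\<in>A. g i) mod 3 = (\<Sum>i\<in>A. h i) mod 3"
proof -
  have "(\<Sum>i\<in>A. g i) mod 3 = (\<Sum>i\<in>A. g i mod 3) mod 3" by (simp add: mod_sum_eq)
  also have "\<dots> = (\<Sum>i\<in>A. h i mod 3) mod 3" using assms by simp
  also have "\<dots> = (\<Sum>i\<in>A. h i) mod 3" by (simp add: mod_sum_eq)
  finally show ?thesis .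
qed

lemma sq_scale_mod:
  fixes a x y :: int
  assumes "a \<in> {1,2}"
  shows "((a * x) mod 3 * ((a * y) mod 3)) mod 3 = (x * y) mod 3"
proof -
  have "((a * x) mod 3 * ((a * y) mod 3)) mod 3 = (a * x * (a * y)) mod 3" by (simp add: mod_mult_eq)
  also have "a * x * (a * y) = (a * a) * (x * y)" by (simp add: algebra_simps)
  also have "((a * a) * (x * y)) mod 3 = (x * y) mod 3"
  proof (cases "a = 1")
    case True then show ?thesis by simp
  next
    case False
    then have "a = 2" using assms by auto
    then have "(a * a) * (x * y) = x * y + (x * y) * 3" by simp
    then show ?thesis by (simp only: mod_mult_self1)
  qed
  finally show ?thesis .
qed

lemma vscale_F3vec: "w \<in> F3vec n \<Longrightarrow> vscale3 a w \<in> F3vec n"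
  unfolding F3vec_def vscale3_def by auto

lemma vscale_1: "w \<in> F3vec n \<Longrightarrow> vscale3 1 w = w"
proof
  fix k assume "w \<in> F3vec n"
  then have "w k \<in> {0,1,2}" by (rule F3vec_vals)
  then show "vscale3 1 w k = w k" unfolding vscale3_def by auto
qed

lemma vscale_zero_iff:
  assumes "a \<in> {1,2}" "x \<in> {0,1,2::int}"
  shows "(a * x) mod 3 = 0 \<longleftrightarrow> x = 0"
proof -
  have "a = 1 \<or> a = 2" "x = 0 \<or> x = 1 \<or> x = 2" using assms by auto
  then show ?thesis by (elim disjE) simp_all
qed

lemma fF_scale:
  assumes w: "w \<in> F3vec n" and a: "a \<in> {1,2}"
  shows "fF n1 n2 u v (vscale3 a w) = fF n1 n2 u v w"
proof -
  let ?w' = "vscale3 a w"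
  have zz: "zzero n1 n2 ?w' = zzero n1 n2 w"
  proof -
    have "\<And>k. ((a * w k) mod 3 = 0) = (w k = 0)" by (rule vscale_zero_iff[OF a F3vec_vals[OF w]])
    then show ?thesis unfolding zzero_def vscale3_def by simp
  qed
  have Q: "Qf n1 c ?w' mod 3 = Qf n1 c w mod 3" for c
    unfolding Qf_def
  proof (rule sum_mod_cong)
    fix i
    have gen: "\<And>y. (c i * y^2) mod 3 = (c i * ((y*y) mod 3)) mod 3"
      by (simp add: power2_eq_square mod_mult_right_eq)
    have "(c i * ((a * w i) mod 3)^2) mod 3 = (c i * (((a * w i) mod 3 * ((a * w i) mod 3)) mod 3)) mod 3"
      by (rule gen)
    also have "\<dots> = (c i * ((w i * w i) mod 3)) mod 3" by (simp only: sq_scale_mod[OF a])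
    also have "\<dots> = (c i * (w i)^2) mod 3" by (rule gen[symmetric])
    finally show "(c i * (?w' i)^2) mod 3 = (c i * (w i)^2) mod 3" unfolding vscale3_def .
  qed
  have Y: "YZ n1 n2 ?w' mod 3 = YZ n1 n2 w mod 3"
    unfolding YZ_def by (rule sum_mod_cong) (simp add: vscale3_def sq_scale_mod[OF a])
  have "Pf n1 n2 u v ?w' mod 3 = Pf n1 n2 u v w mod 3"
    unfolding Pf_def zz by (cases "zzero n1 n2 w") (simp_all add: mod_add_cong[OF Q Y])
  then show ?thesis unfolding fF_Pf .
qed

lemma vscale_vscale:
  assumes w: "w \<in> F3vec n" and a: "a \<in> {1,2}"
  shows "vscale3 a (vscale3 a w) = w"
proof
  fix k
  have "w k = 0 \<or> w k = 1 \<or> w k = 2" using F3vec_vals[OF w, of k] by auto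
  moreover have "a = 1 \<or> a = 2" using a by auto
  ultimately show "vscale3 a (vscale3 a w) k = w k" unfolding vscale3_def by (elim disjE) simp_all
qed


context
  fixes n1 n2 s n :: nat and u v :: "nat \<Rightarrow> int" and T :: "(nat \<Rightarrow> int) set"
  assumes n1: "n1 \<ge> 1" and n2: "n2 \<ge> 1" and n_def: "n = n1 + 2 * n2 + s"
    and u: "\<forall>i<n1. u i \<in> {1, 2}" and v: "\<forall>i<n1. v i \<in> {1, 2}"
    and T_sub: "T \<subseteq> Dzero n (fF n1 n2 u v) - {\<lambda>_. 0}"
    and T_rep: "\<forall>w \<in> Dzero n (fF n1 n2 u v) - {\<lambda>_. 0}.
                  \<exists>!p. fst p \<in> {1, 2} \<and> snd p \<in> T \<and> w = vscale3 (fst p) (snd p)"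
begin

lemma ex1_eq: "\<exists>!x. P x \<Longrightarrow> P a \<Longrightarrow> P b \<Longrightarrow> a = b"
  by blast

lemma T_V: "T \<subseteq> F3vec n"
  using T_sub unfolding Dzero_def by auto

lemma finT: "finite T"
  using T_V finite_F3vec finite_subset by blast

lemma finD: "finite (Dzero n (fF n1 n2 u v))"
  unfolding Dzero_def using finite_F3vec by simp

lemma zero_D: "(\<lambda>_. 0) \<in> Dzero n (fF n1 n2 u v)"
  unfolding Dzero_def F3vec_def fF_def by simp

lemma scale_T:
  assumes t: "t \<in> T" and a: "a \<in> {1,2}"
  shows "vscale3 a t \<in> Dzero n (fF n1 n2 u v) - {\<lambda>_. 0}"
proof -
  have tV: "t \<in> F3vec n" and tD: "fF n1 n2 u v t = 0" and tnz: "t \<noteq> (\<lambda>_. 0)"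
    using t T_sub unfolding Dzero_def by auto
  have "vscale3 a t \<in> F3vec n" by (rule vscale_F3vec[OF tV])
  moreover have "fF n1 n2 u v (vscale3 a t) = 0" using fF_scale[OF tV a] tD by simp
  moreover have "vscale3 a t \<noteq> (\<lambda>_. 0)"
  proof
    assume "vscale3 a t = (\<lambda>_. 0)"
    then have "\<And>k. (a * t k) mod 3 = 0" unfolding vscale3_def by metis
    then have "\<And>k. t k = 0" using vscale_zero_iff[OF a F3vec_vals[OF tV]] by simp
    then show False using tnz by auto
  qed
  ultimately show ?thesis unfolding Dzero_def by simp
qed

lemma phi_bij: "bij_betw (\<lambda>p. vscale3 (fst p) (snd p)) ({1,2} \<times> T) (Dzero n (fF n1 n2 u v) - {\<lambda>_. 0})"
proof (rule bij_betw_imageI)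
  show "inj_on (\<lambda>p. vscale3 (fst p) (snd p)) ({1,2} \<times> T)"
  proof (rule inj_onI)
    fix p q assume p: "p \<in> {1,2} \<times> T" and q: "q \<in> {1,2} \<times> T"
      and eq: "vscale3 (fst p) (snd p) = vscale3 (fst q) (snd q)"
    let ?w = "vscale3 (fst p) (snd p)"
    have pp: "fst p \<in> {1,2}" "snd p \<in> T" using p by (auto simp: mem_Times_iff)
    have qq: "fst q \<in> {1,2}" "snd q \<in> T" using q by (auto simp: mem_Times_iff)
    have wD: "?w \<in> Dzero n (fF n1 n2 u v) - {\<lambda>_. 0}"
      by (rule scale_T[OF pp(2) pp(1)])
    have ex1: "\<exists>!p'. fst p' \<in> {1, 2} \<and> snd p' \<in> T \<and> ?w = vscale3 (fst p') (snd p')"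
      using bspec[OF T_rep wD] .
    moreover have "fst p \<in> {1, 2} \<and> snd p \<in> T \<and> ?w = vscale3 (fst p) (snd p)" using pp by simp
    moreover have "fst q \<in> {1, 2} \<and> snd q \<in> T \<and> ?w = vscale3 (fst q) (snd q)" using qq eq by simp
    ultimately show "p = q" by (rule ex1_eq)
  qed
  show "(\<lambda>p. vscale3 (fst p) (snd p)) ` ({1,2} \<times> T) = Dzero n (fF n1 n2 u v) - {\<lambda>_. 0}"
  proof
    show "(\<lambda>p. vscale3 (fst p) (snd p)) ` ({1,2} \<times> T) \<subseteq> Dzero n (fF n1 n2 u v) - {\<lambda>_. 0}"
    proof
      fix w assume "w \<in> (\<lambda>p. vscale3 (fst p) (snd p)) ` ({1,2} \<times> T)"
      then obtain p where p: "p \<in> {1,2} \<times> T" and w: "w = vscale3 (fst p) (snd p)" by (rule imageE)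
      have pp: "fst p \<in> {1,2}" "snd p \<in> T" using p by (auto simp: mem_Times_iff)
      show "w \<in> Dzero n (fF n1 n2 u v) - {\<lambda>_. 0}" unfolding w by (rule scale_T[OF pp(2) pp(1)])
    qed
  next
    show "Dzero n (fF n1 n2 u v) - {\<lambda>_. 0} \<subseteq> (\<lambda>p. vscale3 (fst p) (snd p)) ` ({1,2} \<times> T)"
    proof
      fix w assume wD: "w \<in> Dzero n (fF n1 n2 u v) - {\<lambda>_. 0}"
      have "\<exists>p. fst p \<in> {1, 2} \<and> snd p \<in> T \<and> w = vscale3 (fst p) (snd p)"
        using ex1_implies_ex[OF bspec[OF T_rep wD]] .
      then obtain p where p: "fst p \<in> {1, 2}" "snd p \<in> T" "w = vscale3 (fst p) (snd p)" by (elim exE conjE)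
      have "p \<in> {1,2} \<times> T" using p(1,2) by (simp add: mem_Times_iff)
      then show "w \<in> (\<lambda>p. vscale3 (fst p) (snd p)) ` ({1,2} \<times> T)" using p(3) by (rule rev_image_eqI)
    qed
  qed
qed

lemma card_D_T: "card (Dzero n (fF n1 n2 u v)) = 2 * card T + 1"
proof -
  have "card (Dzero n (fF n1 n2 u v) - {\<lambda>_. 0}) = card ({1::int,2} \<times> T)"
    using bij_betw_same_card[OF phi_bij] by simp
  also have "\<dots> = 2 * card T" by (simp add: card_cartesian_product)
  finally have "card (Dzero n (fF n1 n2 u v) - {\<lambda>_. 0}) = 2 * card T" .
  moreover have "card (Dzero n (fF n1 n2 u v) - {\<lambda>_. 0}) = card (Dzero n (fF n1 n2 u v)) - 1"
    using zero_D finD by simp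
  moreover have "card (Dzero n (fF n1 n2 u v)) \<ge> 1"
    using zero_D finD by (metis One_nat_def Suc_leI card_gt_0_iff empty_iff)
  ultimately show ?thesis by simp
qed

lemma sumT_dvd:
  assumes kl: "k < n" "l < n" and n4: "4 \<le> n" and cond: "4 \<le> n1 + n2 + s \<or> n1 = 1"
  shows "(3::int) dvd (\<Sum>x\<in>T. x k * x l)"
proof -
  let ?D = "Dzero n (fF n1 n2 u v)"
  have "(\<Sum>w\<in>?D - {\<lambda>_. 0}. w k * w l) = (\<Sum>p\<in>{1,2} \<times> T. vscale3 (fst p) (snd p) k * vscale3 (fst p) (snd p) l)"
    by (rule sum.reindex_bij_betw[OF phi_bij, symmetric])
  also have "\<dots> = (\<Sum>a\<in>{1::int,2}. \<Sum>t\<in>T. vscale3 a t k * vscale3 a t l)"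
    by (simp add: sum.cartesian_product split_def)
  also have "\<dots> = (\<Sum>t\<in>T. vscale3 1 t k * vscale3 1 t l) + (\<Sum>t\<in>T. vscale3 2 t k * vscale3 2 t l)"
    by simp
  finally have e0: "(\<Sum>w\<in>?D - {\<lambda>_. 0}. w k * w l) = (\<Sum>t\<in>T. vscale3 1 t k * vscale3 1 t l) + (\<Sum>t\<in>T. vscale3 2 t k * vscale3 2 t l)" .
  have "(\<Sum>t\<in>T. vscale3 1 t k * vscale3 1 t l) = (\<Sum>t\<in>T. t k * t l)"
    by (intro sum.cong refl) (use vscale_1 T_V in auto)
  with e0 have e1: "(\<Sum>w\<in>?D - {\<lambda>_. 0}. w k * w l) = (\<Sum>t\<in>T. t k * t l) + (\<Sum>t\<in>T. vscale3 2 t k * vscale3 2 t l)"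
    by simp
  have e2: "(\<Sum>w\<in>?D. w k * w l) = (\<Sum>w\<in>?D - {\<lambda>_. 0}. w k * w l)"
    using zero_D finD by (simp add: sum.remove)
  have m: "(\<Sum>t\<in>T. vscale3 2 t k * vscale3 2 t l) mod 3 = (\<Sum>t\<in>T. t k * t l) mod 3"
    by (rule sum_mod_cong) (simp add: vscale3_def sq_scale_mod)
  have "3 dvd (\<Sum>w\<in>?D. w k * w l)"
    by (rule S_dvd[OF n_def n4 cond kl u v])
  then have z: "((\<Sum>t\<in>T. t k * t l) + (\<Sum>t\<in>T. vscale3 2 t k * vscale3 2 t l)) mod 3 = 0"
    using e1 e2 by simp
  define A where "A = (\<Sum>t\<in>T. t k * t l)"
  define B where "B = (\<Sum>t\<in>T. vscale3 2 t k * vscale3 2 t l)"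
  have mB: "B mod 3 = A mod 3" using m unfolding A_def B_def .
  have "(A + B) mod 3 = (A + B mod 3) mod 3" by (simp add: mod_add_right_eq)
  also have "\<dots> = (A + A mod 3) mod 3" using mB by simp
  also have "\<dots> = (A + A) mod 3" by (simp add: mod_add_right_eq)
  finally have "(A + A) mod 3 = 0" using z unfolding A_def B_def by simp
  then show ?thesis unfolding A_def by presburger
qed

end


definition dI :: "nat \<Rightarrow> (nat \<Rightarrow> int) \<Rightarrow> (nat \<Rightarrow> int) \<Rightarrow> int" where
  "dI n a b = (\<Sum>k<n. a k * b k)"

definition beta :: "nat \<Rightarrow> nat \<Rightarrow> (nat \<Rightarrow> int) \<Rightarrow> (nat \<Rightarrow> int)" where
  "beta n1 n c = (\<lambda>k. \<Sum>i<n. c i * alphavec n1 i k)"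

lemma dot3_dI: "dot3 n a b = dI n a b mod 3"
  unfolding dot3_def dI_def by simp

lemma dI_sym: "dI n a b = dI n b a"
  unfolding dI_def by (simp add: mult.commute)

lemma dI_diff: "dI n a (\<lambda>k. b k - b' k) = dI n a b - dI n a b'"
  unfolding dI_def by (simp add: algebra_simps sum_subtractf)

lemma alpha_val: "alphavec n1 i k = (if i < n1 then (if k = i then 1 else 0) else (if k = 0 then 1 else 0) + (if k = i then 1 else 0))"
  unfolding alphavec_def unitvec_def by simp

lemma Ay_formula:
  assumes "i < n" "1 \<le> n1"
  shows "dI n (alphavec n1 i) y = (if i < n1 then y i else y 0 + y i)"
proof (cases "i < n1")
  case True
  have "dI n (alphavec n1 i) y = (\<Sum>k<n. if k = i then y k else 0)"
    unfolding dI_def alpha_val using True by (intro sum.cong) auto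
  also have "\<dots> = y i" using assms by simp
  finally show ?thesis using True by simp
next
  case False
  have "dI n (alphavec n1 i) y = (\<Sum>k<n. (if k = 0 then y k else 0) + (if k = i then y k else 0))"
    unfolding dI_def alpha_val using False by (intro sum.cong) (auto simp: algebra_simps)
  also have "\<dots> = y 0 + y i" using assms by (simp add: sum.distrib)
  finally show ?thesis using False by simp
qed

lemma L3:
  assumes n1: "1 \<le> n1" "n1 \<le> n" and H: "\<And>i. i < n \<Longrightarrow> (3::int) dvd dI n (alphavec n1 i) y"
  shows "\<And>k. k < n \<Longrightarrow> (3::int) dvd y k"
proof -
  have y0: "3 dvd y 0" using H[of 0] Ay_formula[of 0 n n1 y] n1 by simp
  fix k assume k: "k < n"
  show "3 dvd y k"
  proof (cases "k < n1")
    case True then show ?thesis using H[OF k] Ay_formula[OF k n1(1), of y] by simp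
  next
    case False
    then have "3 dvd (y 0 + y k)" using H[OF k] Ay_formula[OF k n1(1), of y] by simp
    then show ?thesis using y0 by (simp add: dvd_add_right_iff)
  qed
qed

lemma beta_formula:
  assumes "k < n" "1 \<le> n1" "n1 \<le> n"
  shows "beta n1 n c k = c k + (if k = 0 then (\<Sum>i\<in>{n1..<n}. c i) else 0)"
proof -
  have "beta n1 n c k = (\<Sum>i<n. (if i = k then c i else 0) + (if k = 0 \<and> n1 \<le> i then c i else 0))"
    unfolding beta_def alpha_val using assms by (intro sum.cong) auto
  also have "\<dots> = c k + (\<Sum>i<n. if k = 0 \<and> n1 \<le> i then c i else 0)"
    using assms by (simp add: sum.distrib)
  also have "(\<Sum>i<n. if k = 0 \<and> n1 \<le> i then c i else 0) = (if k = 0 then (\<Sum>i\<in>{n1..<n}. c i) else 0)"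
  proof (cases "k = 0")
    case True
    have "(\<Sum>i<n. if n1 \<le> i then c i else 0) = (\<Sum>i\<in>{i \<in> {..<n}. n1 \<le> i}. c i)"
      by (rule sum.inter_filter[symmetric]) simp
    also have "{i \<in> {..<n}. n1 \<le> i} = {n1..<n}" by auto
    finally show ?thesis using True by simp
  qed simp
  finally show ?thesis .
qed

lemma L3':
  assumes n1: "1 \<le> n1" "n1 \<le> n" and H: "\<And>k. k < n \<Longrightarrow> (3::int) dvd beta n1 n c k"
  shows "\<And>i. i < n \<Longrightarrow> (3::int) dvd c i"
proof -
  have nz: "3 dvd c i" if "i < n" "i \<noteq> 0" for i
    using H[OF that(1)] beta_formula[OF that(1) n1] that by simp
  have "3 dvd (\<Sum>i\<in>{n1..<n}. c i)" by (rule dvd_sum) (use nz n1 in auto)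
  moreover have "3 dvd (c 0 + (\<Sum>i\<in>{n1..<n}. c i))"
    using H[of 0] beta_formula[of 0 n n1 c] n1 by simp
  ultimately have c0: "3 dvd c 0" by (simp add: dvd_add_left_iff)
  fix i assume "i < n"
  then show "3 dvd c i" using nz c0 by (cases "i = 0") auto
qed

lemma dI_beta: "dI n (beta n1 n c) y = (\<Sum>i<n. c i * dI n (alphavec n1 i) y)"
proof -
  have "dI n (beta n1 n c) y = (\<Sum>k<n. \<Sum>i<n. c i * alphavec n1 i k * y k)"
    unfolding dI_def beta_def by (simp add: sum_distrib_right)
  also have "\<dots> = (\<Sum>i<n. \<Sum>k<n. c i * alphavec n1 i k * y k)" by (rule sum.swap)
  also have "\<dots> = (\<Sum>i<n. c i * dI n (alphavec n1 i) y)"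
    unfolding dI_def by (simp add: sum_distrib_left mult.assoc)
  finally show ?thesis .
qed

lemma beta_diff: "beta n1 n (\<lambda>i. c i - c' i) = (\<lambda>k. beta n1 n c k - beta n1 n c' k)"
  unfolding beta_def by (simp add: algebra_simps sum_subtractf)


definition wd :: "nat \<Rightarrow> nat \<Rightarrow> (nat \<Rightarrow> int) set \<Rightarrow> (nat \<Rightarrow> int) \<Rightarrow> (nat + (nat \<Rightarrow> int)) \<Rightarrow> int" where
  "wd n1 n T c = (\<lambda>j. if j \<in> colset n T then (\<Sum>i<n. c i * Gprime n1 n i j) mod 3 else 0)"

definition piz :: "nat \<Rightarrow> nat \<Rightarrow> (nat \<Rightarrow> int) set \<Rightarrow> (nat + (nat \<Rightarrow> int) \<Rightarrow> int) \<Rightarrow> nat \<Rightarrow> int" where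
  "piz n1 n T z i = (\<Sum>j\<in>colset n T. z j * Gprime n1 n i j)"

definition Mx :: "nat \<Rightarrow> nat \<Rightarrow> (nat \<Rightarrow> int) set \<Rightarrow> nat \<Rightarrow> nat \<Rightarrow> int" where
  "Mx n1 n T i' i = (\<Sum>j\<in>colset n T. Gprime n1 n i' j * Gprime n1 n i j)"

lemma gen_code_wd: "gen_code n (colset n T) (Gprime n1 n) = wd n1 n T ` F3vec n"
  unfolding gen_code_def wd_def by auto

lemma sum_colset:
  assumes "finite T"
  shows "(\<Sum>j\<in>colset n T. g j) = (\<Sum>j<n. g (Inl j)) + (\<Sum>x\<in>T. g (Inr x))"
proof -
  have "(\<Sum>j\<in>colset n T. g j) = (\<Sum>j\<in>Inl ` {..<n}. g j) + (\<Sum>j\<in>Inr ` T. g j)"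
    unfolding colset_def by (rule sum.union_disjoint) (use assms in auto)
  also have "\<dots> = (\<Sum>j<n. g (Inl j)) + (\<Sum>x\<in>T. g (Inr x))"
    by (simp add: sum.reindex)
  finally show ?thesis .
qed

lemma finite_colset: "finite T \<Longrightarrow> finite (colset n T)"
  unfolding colset_def by simp

lemma Gp_Inl: "Gprime n1 n i (Inl j) = dI n (alphavec n1 i) (alphavec n1 j) mod 3"
  unfolding Gprime_def dot3_dI by simp

lemma Gp_Inr: "Gprime n1 n i (Inr x) = dI n (alphavec n1 i) x mod 3"
  unfolding Gprime_def dot3_dI by simp

lemma Gp_mod: "Gprime n1 n i j mod 3 = Gprime n1 n i j"
  unfolding Gprime_def dot3_def by (cases j) simp_all

lemma mod3_dvd_iff: "(a::int) mod 3 = b mod 3 \<Longrightarrow> 3 dvd a \<longleftrightarrow> 3 dvd b"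
  by (metis dvd_eq_mod_eq_0)

lemma Lin:
  assumes finT: "finite T"
  shows "(\<Sum>j\<in>colset n T. z j * wd n1 n T c j) mod 3 = (\<Sum>i<n. c i * piz n1 n T z i) mod 3"
proof -
  have "(\<Sum>j\<in>colset n T. z j * wd n1 n T c j) mod 3 = (\<Sum>j\<in>colset n T. z j * (\<Sum>i<n. c i * Gprime n1 n i j)) mod 3"
  proof (rule sum_mod_cong)
    fix j assume "j \<in> colset n T"
    then show "(z j * wd n1 n T c j) mod 3 = (z j * (\<Sum>i<n. c i * Gprime n1 n i j)) mod 3"
      unfolding wd_def by (simp add: mod_mult_right_eq)
  qed
  also have "(\<Sum>j\<in>colset n T. z j * (\<Sum>i<n. c i * Gprime n1 n i j)) = (\<Sum>j\<in>colset n T. \<Sum>i<n. c i * (z j * Gprime n1 n i j))"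
    by (simp add: sum_distrib_left mult_ac)
  also have "\<dots> = (\<Sum>i<n. \<Sum>j\<in>colset n T. c i * (z j * Gprime n1 n i j))" by (rule sum.swap)
  also have "\<dots> = (\<Sum>i<n. c i * piz n1 n T z i)" unfolding piz_def by (simp add: sum_distrib_left)
  finally show ?thesis .
qed

lemma piz_wd:
  assumes finT: "finite T"
  shows "piz n1 n T (wd n1 n T c) i mod 3 = (\<Sum>i'<n. c i' * Mx n1 n T i' i) mod 3"
proof -
  have "piz n1 n T (wd n1 n T c) i mod 3 = (\<Sum>j\<in>colset n T. (\<Sum>i'<n. c i' * Gprime n1 n i' j) * Gprime n1 n i j) mod 3"
    unfolding piz_def
  proof (rule sum_mod_cong)
    fix j assume "j \<in> colset n T"
    then show "(wd n1 n T c j * Gprime n1 n i j) mod 3 = ((\<Sum>i'<n. c i' * Gprime n1 n i' j) * Gprime n1 n i j) mod 3"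
      unfolding wd_def by (simp add: mod_mult_left_eq)
  qed
  also have "(\<Sum>j\<in>colset n T. (\<Sum>i'<n. c i' * Gprime n1 n i' j) * Gprime n1 n i j) = (\<Sum>j\<in>colset n T. \<Sum>i'<n. c i' * (Gprime n1 n i' j * Gprime n1 n i j))"
    by (simp add: sum_distrib_right mult.assoc)
  also have "\<dots> = (\<Sum>i'<n. \<Sum>j\<in>colset n T. c i' * (Gprime n1 n i' j * Gprime n1 n i j))" by (rule sum.swap)
  also have "\<dots> = (\<Sum>i'<n. c i' * Mx n1 n T i' i)" unfolding Mx_def by (simp add: sum_distrib_left)
  finally show ?thesis .
qed


lemma mm3: "((x::int) mod 3 * (y mod 3)) mod 3 = (x * y) mod 3"
  by (simp add: mod_mult_eq)

locale cctx =
  fixes n1 n :: nat and T :: "(nat \<Rightarrow> int) set"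
  assumes n1: "1 \<le> n1" and n1n: "n1 \<le> n" and finT: "finite T"
    and Sdvd: "\<And>k l. k < n \<Longrightarrow> l < n \<Longrightarrow> (3::int) dvd (\<Sum>x\<in>T. x k * x l)"
begin

lemma A6: "(3::int) dvd (\<Sum>x\<in>T. dI n a x * dI n b x)"
proof -
  have "(\<Sum>x\<in>T. dI n a x * dI n b x) = (\<Sum>x\<in>T. \<Sum>k<n. \<Sum>l<n. (a k * x k) * (b l * x l))"
    unfolding dI_def by (simp add: sum_product)
  also have "\<dots> = (\<Sum>k<n. \<Sum>x\<in>T. \<Sum>l<n. (a k * x k) * (b l * x l))" by (rule sum.swap)
  also have "\<dots> = (\<Sum>k<n. \<Sum>l<n. \<Sum>x\<in>T. (a k * x k) * (b l * x l))"
    by (intro sum.cong refl) (rule sum.swap)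
  also have "\<dots> = (\<Sum>k<n. \<Sum>l<n. (a k * b l) * (\<Sum>x\<in>T. x k * x l))"
    by (intro sum.cong refl) (simp add: sum_distrib_left mult_ac)
  also have "(3::int) dvd \<dots>"
  proof (intro dvd_sum)
    fix k l assume "k \<in> {..<n}" "l \<in> {..<n}"
    then show "(3::int) dvd (a k * b l) * (\<Sum>x\<in>T. x k * x l)" by (intro dvd_mult Sdvd) auto
  qed
  finally show ?thesis .
qed

lemma L1:
  assumes H: "\<And>j. j < n \<Longrightarrow> (3::int) dvd dI n (alphavec n1 j) (beta n1 n c)"
  shows "\<And>i. i < n \<Longrightarrow> (3::int) dvd c i"
proof -
  have "\<And>k. k < n \<Longrightarrow> (3::int) dvd beta n1 n c k" by (rule L3[OF n1 n1n H])
  then show "\<And>i. i < n \<Longrightarrow> (3::int) dvd c i" by (rule L3'[OF n1 n1n])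
qed

lemma L2:
  assumes H: "\<And>i. i < n \<Longrightarrow> (3::int) dvd (\<Sum>i'<n. c i' * Mx n1 n T i' i)"
  shows "\<And>i. i < n \<Longrightarrow> (3::int) dvd c i"
proof -
  define \<gamma> where "\<gamma> = (\<lambda>j. dI n (beta n1 n c) (alphavec n1 j))"
  have key: "(\<Sum>i'<n. c i' * Mx n1 n T i' i) mod 3 = dI n (alphavec n1 i) (beta n1 n \<gamma>) mod 3" for i
  proof -
    let ?A = "\<lambda>i'. (\<Sum>j<n. dI n (alphavec n1 i') (alphavec n1 j) * dI n (alphavec n1 i) (alphavec n1 j))"
    let ?B = "\<lambda>i'. (\<Sum>x\<in>T. dI n (alphavec n1 i') x * dI n (alphavec n1 i) x)"
    have M: "Mx n1 n T i' i mod 3 = (?A i' + ?B i') mod 3" for i'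
    proof -
      have e: "Mx n1 n T i' i = (\<Sum>j<n. Gprime n1 n i' (Inl j) * Gprime n1 n i (Inl j)) + (\<Sum>x\<in>T. Gprime n1 n i' (Inr x) * Gprime n1 n i (Inr x))"
        unfolding Mx_def by (rule sum_colset[OF finT])
      have c1: "(\<Sum>j<n. Gprime n1 n i' (Inl j) * Gprime n1 n i (Inl j)) mod 3 = ?A i' mod 3"
        by (rule sum_mod_cong) (simp add: Gp_Inl mm3)
      have c2: "(\<Sum>x\<in>T. Gprime n1 n i' (Inr x) * Gprime n1 n i (Inr x)) mod 3 = ?B i' mod 3"
        by (rule sum_mod_cong) (simp add: Gp_Inr mm3)
      show ?thesis unfolding e by (rule mod_add_cong[OF c1 c2])
    qed
    have "(\<Sum>i'<n. c i' * Mx n1 n T i' i) mod 3 = (\<Sum>i'<n. c i' * (?A i' + ?B i')) mod 3"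
    proof (rule sum_mod_cong)
      fix i'
      have "(c i' * Mx n1 n T i' i) mod 3 = (c i' * (Mx n1 n T i' i mod 3)) mod 3" by (simp add: mod_mult_right_eq)
      also have "\<dots> = (c i' * ((?A i' + ?B i') mod 3)) mod 3" using M by simp
      also have "\<dots> = (c i' * (?A i' + ?B i')) mod 3" by (simp add: mod_mult_right_eq)
      finally show "(c i' * Mx n1 n T i' i) mod 3 = (c i' * (?A i' + ?B i')) mod 3" .
    qed
    also have "(\<Sum>i'<n. c i' * (?A i' + ?B i')) = (\<Sum>i'<n. c i' * ?A i') + (\<Sum>i'<n. c i' * ?B i')"
      by (simp add: distrib_left sum.distrib)
    also have "(\<Sum>i'<n. c i' * ?A i') = (\<Sum>j<n. \<gamma> j * dI n (alphavec n1 i) (alphavec n1 j))"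
    proof -
      have "(\<Sum>i'<n. c i' * ?A i') = (\<Sum>i'<n. \<Sum>j<n. c i' * dI n (alphavec n1 i') (alphavec n1 j) * dI n (alphavec n1 i) (alphavec n1 j))"
        by (simp add: sum_distrib_left mult.assoc)
      also have "\<dots> = (\<Sum>j<n. \<Sum>i'<n. c i' * dI n (alphavec n1 i') (alphavec n1 j) * dI n (alphavec n1 i) (alphavec n1 j))"
        by (rule sum.swap)
      also have "\<dots> = (\<Sum>j<n. \<gamma> j * dI n (alphavec n1 i) (alphavec n1 j))"
        unfolding \<gamma>_def dI_beta by (simp add: sum_distrib_right)
      finally show ?thesis .
    qed
    also have "(\<Sum>i'<n. c i' * ?B i') = (\<Sum>x\<in>T. dI n (beta n1 n c) x * dI n (alphavec n1 i) x)"
    proof -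
      have "(\<Sum>i'<n. c i' * ?B i') = (\<Sum>i'<n. \<Sum>x\<in>T. c i' * dI n (alphavec n1 i') x * dI n (alphavec n1 i) x)"
        by (simp add: sum_distrib_left mult.assoc)
      also have "\<dots> = (\<Sum>x\<in>T. \<Sum>i'<n. c i' * dI n (alphavec n1 i') x * dI n (alphavec n1 i) x)"
        by (rule sum.swap)
      also have "\<dots> = (\<Sum>x\<in>T. dI n (beta n1 n c) x * dI n (alphavec n1 i) x)"
        unfolding dI_beta by (simp add: sum_distrib_right)
      finally show ?thesis .
    qed
    also have "(\<Sum>j<n. \<gamma> j * dI n (alphavec n1 i) (alphavec n1 j)) = dI n (alphavec n1 i) (beta n1 n \<gamma>)"
      by (simp add: dI_beta dI_sym[of n "alphavec n1 i"])
    finally have "(\<Sum>i'<n. c i' * Mx n1 n T i' i) mod 3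
       = (dI n (alphavec n1 i) (beta n1 n \<gamma>) + (\<Sum>x\<in>T. dI n (beta n1 n c) x * dI n (alphavec n1 i) x)) mod 3" .
    moreover have "(3::int) dvd (\<Sum>x\<in>T. dI n (beta n1 n c) x * dI n (alphavec n1 i) x)" by (rule A6)
    ultimately show ?thesis
    proof -
      assume e: "(\<Sum>i'<n. c i' * Mx n1 n T i' i) mod 3
         = (dI n (alphavec n1 i) (beta n1 n \<gamma>) + (\<Sum>x\<in>T. dI n (beta n1 n c) x * dI n (alphavec n1 i) x)) mod 3"
        and d: "(3::int) dvd (\<Sum>x\<in>T. dI n (beta n1 n c) x * dI n (alphavec n1 i) x)"
      have z: "(\<Sum>x\<in>T. dI n (beta n1 n c) x * dI n (alphavec n1 i) x) mod 3 = 0" using d by simp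
      show ?thesis unfolding e by (subst mod_add_right_eq[symmetric]) (simp only: z add_0_right)
    qed
  qed
  have "(3::int) dvd dI n (alphavec n1 i) (beta n1 n \<gamma>)" if "i < n" for i
    using H[OF that] unfolding mod3_dvd_iff[OF key[of i]] .
  then have g: "\<And>j. j < n \<Longrightarrow> (3::int) dvd \<gamma> j" by (rule L1)
  have "\<And>j. j < n \<Longrightarrow> (3::int) dvd dI n (alphavec n1 j) (beta n1 n c)"
    using g unfolding \<gamma>_def by (simp add: dI_sym)
  then show "\<And>i. i < n \<Longrightarrow> (3::int) dvd c i" by (rule L1)
qed

end


lemma rev_bspec: "x \<in> A \<Longrightarrow> \<forall>y\<in>A. P y \<Longrightarrow> P x" by simp

lemma words3_insert:
  assumes "a \<notin> J"
  shows "words3 (insert a J) = (\<lambda>(x,w). w(a := x)) ` ({0,1,2} \<times> words3 J)"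
proof
  show "words3 (insert a J) \<subseteq> (\<lambda>(x,w). w(a := x)) ` ({0,1,2} \<times> words3 J)"
  proof
    fix w assume w: "w \<in> words3 (insert a J)"
    have "w = (\<lambda>(x,w). w(a := x)) (w a, w(a := 0))" by simp
    moreover have "w a \<in> {0,1,2}" using w unfolding words3_def by auto
    moreover have "w(a := 0) \<in> words3 J" using w unfolding words3_def by auto
    ultimately show "w \<in> (\<lambda>(x,w). w(a := x)) ` ({0,1,2} \<times> words3 J)" by blast
  qed
  show "(\<lambda>(x,w). w(a := x)) ` ({0,1,2} \<times> words3 J) \<subseteq> words3 (insert a J)"
  proof
    fix v assume "v \<in> (\<lambda>(x,w). w(a := x)) ` ({0,1,2} \<times> words3 J)"
    then obtain x w where x: "x \<in> {0,1,2}" and w: "w \<in> words3 J" and v: "v = w(a := x)" by auto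
    have "\<forall>j\<in>insert a J. v j \<in> {0,1,2}"
    proof
      fix j assume "j \<in> insert a J"
      then show "v j \<in> {0,1,2}" using x w unfolding v words3_def by (cases "j = a") auto
    qed
    moreover have "\<forall>j. j \<notin> insert a J \<longrightarrow> v j = 0" using w unfolding v words3_def by auto
    ultimately show "v \<in> words3 (insert a J)" unfolding words3_def by blast
  qed
qed

lemma words3_insert_inj:
  assumes "a \<notin> J"
  shows "inj_on (\<lambda>(x,w). w(a := x)) ({0,1,2} \<times> words3 J)"
proof (rule inj_onI, clarsimp)
  fix x w y w'
  assume w: "w \<in> words3 J" and w': "w' \<in> words3 J" and eq: "w(a := x) = w'(a := y)"
  have wa: "w a = 0" "w' a = 0" using w w' assms unfolding words3_def by auto
  have "x = y" using fun_cong[OF eq, of a] by simp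
  moreover have "w = w'"
  proof
    fix i show "w i = w' i" using fun_cong[OF eq, of i] wa by (cases "i = a") auto
  qed
  ultimately show "x = y \<and> w = w'" by simp
qed

lemma finite_words3:
  fixes J :: "'j set"
  shows "finite J \<Longrightarrow> finite (words3 J)"
proof (induction J rule: finite_induct)
  case empty
  have "words3 ({}::'j set) = {\<lambda>_. 0}" unfolding words3_def by auto
  then show ?case by simp
next
  case (insert a J)
  then show ?case by (simp add: words3_insert)
qed

lemma card_words3:
  fixes J :: "'j set"
  assumes "finite J"
  shows "card (words3 J) = 3 ^ card J"
  using assms
proof (induction J rule: finite_induct)
  case empty
  have "words3 ({}::'j set) = {\<lambda>_. 0}" unfolding words3_def by auto
  then show ?case by simp
next
  case (insert a J)
  have "card (words3 (insert a J)) = card ({0,1,2::int} \<times> words3 J)"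
    unfolding words3_insert[OF insert(2)] by (rule card_image[OF words3_insert_inj[OF insert(2)]])
  also have "\<dots> = 3 * card (words3 J)" by (simp add: card_cartesian_product)
  finally show ?case using insert by simp
qed

context cctx
begin

abbreviation "JJ \<equiv> colset n T"
abbreviation "CC \<equiv> wd n1 n T ` F3vec n"

lemma wd_words: "wd n1 n T c \<in> words3 JJ"
  unfolding wd_def words3_def by auto

lemma unit_V: "i < n \<Longrightarrow> unitvec i \<in> F3vec n"
  unfolding unitvec_def F3vec_def by auto

lemma sum_unit: "i < n \<Longrightarrow> (\<Sum>ia<n. unitvec i ia * g ia) = (g i :: int)"
proof -
  assume i: "i < n"
  have "(\<Sum>ia<n. unitvec i ia * g ia) = (\<Sum>ia<n. if ia = i then g ia else 0)"
    unfolding unitvec_def by (intro sum.cong) auto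
  also have "\<dots> = g i" using i by simp
  finally show ?thesis .
qed

lemma wd_unit: "i < n \<Longrightarrow> wd n1 n T (unitvec i) = (\<lambda>j. if j \<in> JJ then Gprime n1 n i j else 0)"
proof
  fix j assume i: "i < n"
  show "wd n1 n T (unitvec i) j = (if j \<in> JJ then Gprime n1 n i j else 0)"
    unfolding wd_def using sum_unit[OF i, of "\<lambda>ia. Gprime n1 n ia j"] Gp_mod[of n1 n i j] by simp
qed

lemma piz_cong:
  assumes "\<And>j. j \<in> JJ \<Longrightarrow> z j mod 3 = (a j + k * b j) mod 3"
  shows "piz n1 n T z i mod 3 = (piz n1 n T a i + k * piz n1 n T b i) mod 3"
proof -
  have "piz n1 n T z i mod 3 = (\<Sum>j\<in>JJ. (a j + k * b j) * Gprime n1 n i j) mod 3"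
    unfolding piz_def
  proof (rule sum_mod_cong)
    fix j assume "j \<in> JJ"
    then have "z j mod 3 = (a j + k * b j) mod 3" by (rule assms)
    then show "(z j * Gprime n1 n i j) mod 3 = ((a j + k * b j) * Gprime n1 n i j) mod 3"
      by (rule mod_mult_cong) simp
  qed
  also have "(\<Sum>j\<in>JJ. (a j + k * b j) * Gprime n1 n i j) = piz n1 n T a i + k * piz n1 n T b i"
    unfolding piz_def by (simp add: algebra_simps sum.distrib sum_distrib_left)
  finally show ?thesis .
qed

lemma dual_iff: "z \<in> dual_code JJ CC \<longleftrightarrow> z \<in> words3 JJ \<and> (\<forall>i<n. (3::int) dvd piz n1 n T z i)"
proof
  assume z: "z \<in> dual_code JJ CC"
  have "(3::int) dvd piz n1 n T z i" if i: "i < n" for i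
  proof -
    have "wd n1 n T (unitvec i) \<in> CC" using unit_V[OF i] by simp
    moreover have "\<forall>cw\<in>CC. (\<Sum>j\<in>JJ. z j * cw j) mod 3 = 0" using z unfolding dual_code_def by blast
    ultimately have "(\<Sum>j\<in>JJ. z j * wd n1 n T (unitvec i) j) mod 3 = 0" by (rule rev_bspec)
    moreover have "(\<Sum>j\<in>JJ. z j * wd n1 n T (unitvec i) j) = piz n1 n T z i"
      unfolding wd_unit[OF i] piz_def by (intro sum.cong) auto
    ultimately show ?thesis by (simp add: dvd_eq_mod_eq_0)
  qed
  then show "z \<in> words3 JJ \<and> (\<forall>i<n. (3::int) dvd piz n1 n T z i)" using z unfolding dual_code_def by simp
next
  assume z: "z \<in> words3 JJ \<and> (\<forall>i<n. (3::int) dvd piz n1 n T z i)"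
  have "(\<Sum>j\<in>JJ. z j * cw j) mod 3 = 0" if "cw \<in> CC" for cw
  proof -
    from that obtain c where cw: "cw = wd n1 n T c" by blast
    have "(\<Sum>j\<in>JJ. z j * cw j) mod 3 = (\<Sum>i<n. c i * piz n1 n T z i) mod 3"
      unfolding cw by (rule Lin[OF finT])
    moreover have "(3::int) dvd (\<Sum>i<n. c i * piz n1 n T z i)"
      using z by (intro dvd_sum dvd_mult) auto
    ultimately show ?thesis by simp
  qed
  then show "z \<in> dual_code JJ CC" using z unfolding dual_code_def by simp
qed

lemma V_eq_of_dvd:
  assumes "c \<in> F3vec n" "c' \<in> F3vec n" "\<And>i. i < n \<Longrightarrow> (3::int) dvd (c i - c' i)"
  shows "c = c'"
proof
  fix i
  show "c i = c' i"
  proof (cases "i < n")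
    case True
    have "c i \<in> {0,1,2}" "c' i \<in> {0,1,2}" using assms(1,2) True unfolding F3vec_def by auto
    moreover have "3 dvd (c i - c' i)" using assms(3) True by simp
    ultimately show ?thesis by auto
  next
    case False then show ?thesis using assms(1,2) unfolding F3vec_def by simp
  qed
qed

lemma L2': "(\<And>i. i < n \<Longrightarrow> (\<Sum>i'<n. c i' * Mx n1 n T i' i) mod 3 = (\<Sum>i'<n. c' i' * Mx n1 n T i' i) mod 3)
   \<Longrightarrow> i < n \<Longrightarrow> (3::int) dvd (c i - c' i)"
proof -
  assume H: "\<And>i. i < n \<Longrightarrow> (\<Sum>i'<n. c i' * Mx n1 n T i' i) mod 3 = (\<Sum>i'<n. c' i' * Mx n1 n T i' i) mod 3"
    and i: "i < n"
  have "(3::int) dvd (\<Sum>i'<n. (c i' - c' i') * Mx n1 n T i' i)" if "i < n" for i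
  proof -
    have "(\<Sum>i'<n. (c i' - c' i') * Mx n1 n T i' i) = (\<Sum>i'<n. c i' * Mx n1 n T i' i) - (\<Sum>i'<n. c' i' * Mx n1 n T i' i)"
      by (simp add: left_diff_distrib sum_subtractf)
    then show ?thesis using H[OF that] by (simp add: mod_eq_dvd_iff)
  qed
  then show ?thesis using L2[where c="\<lambda>i'. c i' - c' i'"] i by simp
qed

end


lemma add_dvd3_mod: "(3::int) dvd b \<Longrightarrow> (a + b) mod 3 = a mod 3"
  by (elim dvdE) simp

definition Psi :: "'j set \<Rightarrow> ('j \<Rightarrow> int) \<Rightarrow> ('j \<Rightarrow> int) \<Rightarrow> ('j \<Rightarrow> int)" where
  "Psi J a b = (\<lambda>j. if j \<in> J then (a j + b j) mod 3 else 0)"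

context cctx
begin

lemma wd_Inl:
  assumes j: "j < n"
  shows "wd n1 n T c (Inl j) = dI n (alphavec n1 j) (beta n1 n c) mod 3"
proof -
  have jJ: "Inl j \<in> JJ" using j unfolding colset_def by auto
  have "wd n1 n T c (Inl j) = (\<Sum>i<n. c i * Gprime n1 n i (Inl j)) mod 3" using jJ unfolding wd_def by simp
  also have "\<dots> = (\<Sum>i<n. c i * dI n (alphavec n1 i) (alphavec n1 j)) mod 3"
    by (rule sum_mod_cong) (simp add: Gp_Inl mod_mult_right_eq)
  also have "(\<Sum>i<n. c i * dI n (alphavec n1 i) (alphavec n1 j)) = dI n (alphavec n1 j) (beta n1 n c)"
    by (simp add: dI_beta dI_sym[of n "alphavec n1 j"])
  finally show ?thesis .
qed

lemma wd_inj: "inj_on (wd n1 n T) (F3vec n)"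
proof (rule inj_onI)
  fix c c' assume c: "c \<in> F3vec n" and c': "c' \<in> F3vec n" and eq: "wd n1 n T c = wd n1 n T c'"
  have H: "(3::int) dvd dI n (alphavec n1 j) (beta n1 n (\<lambda>i. c i - c' i))" if j: "j < n" for j
  proof -
    have "dI n (alphavec n1 j) (beta n1 n c) mod 3 = dI n (alphavec n1 j) (beta n1 n c') mod 3"
      using wd_Inl[OF j, of c] wd_Inl[OF j, of c'] eq by simp
    then have "(3::int) dvd (dI n (alphavec n1 j) (beta n1 n c) - dI n (alphavec n1 j) (beta n1 n c'))"
      by (simp add: mod_eq_dvd_iff)
    then show ?thesis by (simp add: beta_diff dI_diff)
  qed
  have "\<And>i. i < n \<Longrightarrow> (3::int) dvd (c i - c' i)"
    using L1[where c="\<lambda>i. c i - c' i", OF H] by simp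
  then show "c = c'" by (rule V_eq_of_dvd[OF c c'])
qed

lemma card_C: "card CC = 3 ^ n"
  using card_image[OF wd_inj] card_F3vec by simp

lemma zero_V: "(\<lambda>_. 0) \<in> F3vec n"
  unfolding F3vec_def by simp

lemma wd_zero: "wd n1 n T (\<lambda>_. 0) = (\<lambda>_. 0)"
  by (rule ext) (simp add: wd_def)

lemma zero_C: "(\<lambda>_. 0) \<in> CC"
  using zero_V wd_zero by (metis image_eqI)

lemma zero_dual: "(\<lambda>_. 0) \<in> dual_code JJ CC"
  unfolding dual_code_def words3_def by simp

lemma C_inter_dual: "cw \<in> CC \<Longrightarrow> cw \<in> dual_code JJ CC \<Longrightarrow> cw = (\<lambda>_. 0)"
proof -
  assume cC: "cw \<in> CC" and cD: "cw \<in> dual_code JJ CC"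
  from cC obtain c where c: "c \<in> F3vec n" and cw: "cw = wd n1 n T c" by blast
  have "\<And>i. i < n \<Longrightarrow> (3::int) dvd piz n1 n T cw i" using cD dual_iff by blast
  then have "\<And>i. i < n \<Longrightarrow> (3::int) dvd (\<Sum>i'<n. c i' * Mx n1 n T i' i)"
    unfolding cw using piz_wd[OF finT] mod3_dvd_iff by metis
  then have "\<And>i. i < n \<Longrightarrow> (3::int) dvd (c i - 0)" using L2 by simp
  then have "c = (\<lambda>_. 0)" by (rule V_eq_of_dvd[OF c zero_V])
  then show "cw = (\<lambda>_. 0)" by (simp add: cw wd_zero)
qed

lemma LCD_C: "is_LCD JJ CC"
  unfolding is_LCD_def using C_inter_dual zero_C zero_dual by blast


definition Phi :: "(nat \<Rightarrow> int) \<Rightarrow> (nat \<Rightarrow> int)" where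
  "Phi c = (\<lambda>i. if i < n then (\<Sum>i'<n. c i' * Mx n1 n T i' i) mod 3 else 0)"

lemma Phi_surj: "Phi ` F3vec n = F3vec n"
proof (rule endo_inj_surj[OF finite_F3vec])
  show "Phi ` F3vec n \<subseteq> F3vec n" unfolding Phi_def F3vec_def by auto
  show "inj_on Phi (F3vec n)"
  proof (rule inj_onI)
    fix c c' assume c: "c \<in> F3vec n" and c': "c' \<in> F3vec n" and eq: "Phi c = Phi c'"
    have H: "(\<Sum>i'<n. c i' * Mx n1 n T i' i) mod 3 = (\<Sum>i'<n. c' i' * Mx n1 n T i' i) mod 3" if "i < n" for i
      using fun_cong[OF eq, of i] that unfolding Phi_def by simp
    have "\<And>i. i < n \<Longrightarrow> (3::int) dvd (c i - c' i)" by (rule L2'[OF H])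
    then show "c = c'" by (rule V_eq_of_dvd[OF c c'])
  qed
qed

lemma decomp:
  assumes z: "z \<in> words3 JJ"
  shows "\<exists>c\<in>F3vec n. \<exists>d\<in>dual_code JJ CC. z = Psi JJ (wd n1 n T c) d"
proof -
  let ?b = "\<lambda>i. if i < n then piz n1 n T z i mod 3 else 0"
  have "?b \<in> F3vec n" unfolding F3vec_def by auto
  then have "?b \<in> Phi ` F3vec n" using Phi_surj by simp
  then obtain c where Pc0: "?b = Phi c" and c: "c \<in> F3vec n" by (rule imageE)
  from Pc0 have Pc: "Phi c = ?b" by simp
  have ceq: "piz n1 n T (wd n1 n T c) i mod 3 = piz n1 n T z i mod 3" if i: "i < n" for i
    using fun_cong[OF Pc, of i] i piz_wd[OF finT, where c=c and i=i] unfolding Phi_def by simp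
  define d where "d = (\<lambda>j. if j \<in> JJ then (z j - wd n1 n T c j) mod 3 else 0)"
  have dW: "d \<in> words3 JJ" unfolding d_def words3_def by auto
  have "(3::int) dvd piz n1 n T d i" if i: "i < n" for i
  proof -
    have "\<And>j. j \<in> JJ \<Longrightarrow> z j mod 3 = (d j + 1 * wd n1 n T c j) mod 3"
      unfolding d_def by (simp add: mod_add_left_eq)
    then have "piz n1 n T z i mod 3 = (piz n1 n T d i + 1 * piz n1 n T (wd n1 n T c) i) mod 3"
      by (rule piz_cong)
    then have "(piz n1 n T d i + piz n1 n T (wd n1 n T c) i) mod 3 = piz n1 n T (wd n1 n T c) i mod 3"
      using ceq[OF i] by simp
    then show ?thesis by (simp add: mod_eq_dvd_iff)
  qed
  then have dD: "d \<in> dual_code JJ CC" unfolding dual_iff using dW by simp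
  have "z = Psi JJ (wd n1 n T c) d"
  proof
    fix j
    show "z j = Psi JJ (wd n1 n T c) d j"
    proof (cases "j \<in> JJ")
      case True
      have "z j \<in> {0,1,2}" using z True unfolding words3_def by auto
      then have "z j mod 3 = z j" by auto
      moreover have "Psi JJ (wd n1 n T c) d j = (wd n1 n T c j + (z j - wd n1 n T c j) mod 3) mod 3"
        unfolding Psi_def d_def using True by simp
      moreover have "(wd n1 n T c j + (z j - wd n1 n T c j) mod 3) mod 3 = z j mod 3"
        by (simp add: mod_add_right_eq)
      ultimately show ?thesis by simp
    next
      case False then show ?thesis using z unfolding Psi_def words3_def by simp
    qed
  qed
  then show ?thesis using c dD by blast
qed

lemma words_eq_of_mod:
  assumes "a \<in> words3 JJ" "b \<in> words3 JJ" "\<And>j. j \<in> JJ \<Longrightarrow> a j mod 3 = b j mod 3"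
  shows "a = b"
proof
  fix j show "a j = b j"
  proof (cases "j \<in> JJ")
    case True
    have "a j \<in> {0,1,2}" "b j \<in> {0,1,2}" using assms(1,2) True unfolding words3_def by auto
    then show ?thesis using assms(3)[OF True] by auto
  next
    case False then show ?thesis using assms(1,2) unfolding words3_def by simp
  qed
qed

lemma Psi_bij: "bij_betw (\<lambda>p. Psi JJ (fst p) (snd p)) (CC \<times> dual_code JJ CC) (words3 JJ)"
proof (rule bij_betw_imageI)
  show "inj_on (\<lambda>p. Psi JJ (fst p) (snd p)) (CC \<times> dual_code JJ CC)"
  proof (rule inj_onI)
    fix p q assume p: "p \<in> CC \<times> dual_code JJ CC" and q: "q \<in> CC \<times> dual_code JJ CC"
      and eq: "Psi JJ (fst p) (snd p) = Psi JJ (fst q) (snd q)"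
    obtain c where c: "c \<in> F3vec n" and pc: "fst p = wd n1 n T c" using p by auto
    obtain c' where c': "c' \<in> F3vec n" and qc: "fst q = wd n1 n T c'" using q by auto
    have pd: "snd p \<in> dual_code JJ CC" and qd: "snd q \<in> dual_code JJ CC" using p q by auto
    have Pe: "Psi JJ (fst p) (snd p) j mod 3 = (fst p j + 1 * snd p j) mod 3" if "j \<in> JJ" for j
      using that unfolding Psi_def by simp
    have Qe: "Psi JJ (fst q) (snd q) j mod 3 = (fst q j + 1 * snd q j) mod 3" if "j \<in> JJ" for j
      using that unfolding Psi_def by simp
    let ?z = "Psi JJ (fst p) (snd p)"
    have z1: "piz n1 n T ?z i mod 3 = (piz n1 n T (fst p) i + 1 * piz n1 n T (snd p) i) mod 3" for i
      by (rule piz_cong) (rule Pe)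
    have z2: "piz n1 n T ?z i mod 3 = (piz n1 n T (fst q) i + 1 * piz n1 n T (snd q) i) mod 3" for i
      by (rule piz_cong) (use Qe eq in simp)
    have H: "(\<Sum>i'<n. c i' * Mx n1 n T i' i) mod 3 = (\<Sum>i'<n. c' i' * Mx n1 n T i' i) mod 3" if i: "i < n" for i
    proof -
      have "(3::int) dvd piz n1 n T (snd p) i" "(3::int) dvd piz n1 n T (snd q) i"
        using pd qd i dual_iff by blast+
      then have "piz n1 n T ?z i mod 3 = piz n1 n T (fst p) i mod 3" "piz n1 n T ?z i mod 3 = piz n1 n T (fst q) i mod 3"
        using z1[of i] z2[of i] by (simp_all add: add_dvd3_mod)
      then show ?thesis using piz_wd[OF finT, where c=c and i=i] piz_wd[OF finT, where c=c' and i=i] pc qc by simp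
    qed
    have "\<And>i. i < n \<Longrightarrow> (3::int) dvd (c i - c' i)" by (rule L2'[OF H])
    then have "c = c'" by (rule V_eq_of_dvd[OF c c'])
    then have fe: "fst p = fst q" using pc qc by simp
    have "snd p = snd q"
    proof (rule words_eq_of_mod)
      show "snd p \<in> words3 JJ" "snd q \<in> words3 JJ" using pd qd unfolding dual_code_def by auto
      fix j assume j: "j \<in> JJ"
      have "(fst p j + snd p j) mod 3 = (fst p j + snd q j) mod 3"
        using fun_cong[OF eq, of j] j fe unfolding Psi_def by simp
      then have "(3::int) dvd ((fst p j + snd p j) - (fst p j + snd q j))" by (simp only: mod_eq_dvd_iff)
      then show "snd p j mod 3 = snd q j mod 3" by (simp add: mod_eq_dvd_iff)
    qed
    then show "p = q" using fe by (simp add: prod_eq_iff)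
  qed
  show "(\<lambda>p. Psi JJ (fst p) (snd p)) ` (CC \<times> dual_code JJ CC) = words3 JJ"
  proof
    show "(\<lambda>p. Psi JJ (fst p) (snd p)) ` (CC \<times> dual_code JJ CC) \<subseteq> words3 JJ"
      unfolding Psi_def words3_def by auto
    show "words3 JJ \<subseteq> (\<lambda>p. Psi JJ (fst p) (snd p)) ` (CC \<times> dual_code JJ CC)"
    proof
      fix z assume z: "z \<in> words3 JJ"
      obtain c d where c: "c \<in> F3vec n" and d: "d \<in> dual_code JJ CC" and zz: "z = Psi JJ (wd n1 n T c) d"
        using decomp[OF z] by blast
      have "(wd n1 n T c, d) \<in> CC \<times> dual_code JJ CC" using c d by simp
      then show "z \<in> (\<lambda>p. Psi JJ (fst p) (snd p)) ` (CC \<times> dual_code JJ CC)"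
        using zz by (metis (no_types, lifting) fst_conv snd_conv image_eqI)
    qed
  qed
qed

lemma card_colset: "card JJ = n + card T"
proof -
  have "card JJ = card (Inl ` {..<n} :: (nat + (nat \<Rightarrow> int)) set) + card (Inr ` T :: (nat + (nat \<Rightarrow> int)) set)"
    unfolding colset_def by (rule card_Un_disjoint) (use finT in auto)
  also have "\<dots> = n + card T" by (simp add: card_image)
  finally show ?thesis .
qed

lemma card_dual: "card (dual_code JJ CC) = 3 ^ card T"
proof -
  have fin: "finite JJ" using finite_colset[OF finT] .
  have "card (CC \<times> dual_code JJ CC) = card (words3 JJ)" by (rule bij_betw_same_card[OF Psi_bij])
  also have "\<dots> = 3 ^ (n + card T)" using card_words3[OF fin] card_colset by simp
  finally have "3 ^ n * card (dual_code JJ CC) = 3 ^ n * 3 ^ card T"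
    using card_C by (simp add: card_cartesian_product power_add)
  then show ?thesis by simp
qed

lemma LCD_dual: "is_LCD JJ (dual_code JJ CC)"
proof -
  have "x = (\<lambda>_. 0)" if x1: "x \<in> dual_code JJ CC" and x2: "x \<in> dual_code JJ (dual_code JJ CC)" for x
  proof (rule words_eq_of_mod)
    show "x \<in> words3 JJ" using x1 unfolding dual_code_def by auto
    show "(\<lambda>_. 0) \<in> words3 JJ" unfolding words3_def by simp
    fix j0 assume j0: "j0 \<in> JJ"
    let ?e = "\<lambda>j. if j = j0 then 1 else (0::int)"
    have eW: "?e \<in> words3 JJ" using j0 unfolding words3_def by auto
    obtain c d where c: "c \<in> F3vec n" and d: "d \<in> dual_code JJ CC" and ee: "?e = Psi JJ (wd n1 n T c) d"
      using decomp[OF eW] by blast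
    have s1: "(\<Sum>j\<in>JJ. x j * wd n1 n T c j) mod 3 = 0" using x1 c unfolding dual_code_def by auto
    have s2: "(\<Sum>j\<in>JJ. x j * d j) mod 3 = 0" using x2 d unfolding dual_code_def by auto
    have "(\<Sum>j\<in>JJ. x j * ?e j) mod 3 = (\<Sum>j\<in>JJ. x j * wd n1 n T c j + x j * d j) mod 3"
    proof (rule sum_mod_cong)
      fix j assume j: "j \<in> JJ"
      have "?e j = (wd n1 n T c j + d j) mod 3" using fun_cong[OF ee, of j] j unfolding Psi_def by simp
      then show "(x j * ?e j) mod 3 = (x j * wd n1 n T c j + x j * d j) mod 3"
        by (simp add: mod_mult_right_eq distrib_left[symmetric])
    qed
    also have "\<dots> = ((\<Sum>j\<in>JJ. x j * wd n1 n T c j) + (\<Sum>j\<in>JJ. x j * d j)) mod 3" by (simp add: sum.distrib)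
    also have "\<dots> = ((\<Sum>j\<in>JJ. x j * wd n1 n T c j) mod 3 + (\<Sum>j\<in>JJ. x j * d j) mod 3) mod 3"
      by (rule mod_add_eq[symmetric])
    also have "\<dots> = 0" using s1 s2 by simp
    finally have "(\<Sum>j\<in>JJ. x j * ?e j) mod 3 = 0" .
    moreover have "(\<Sum>j\<in>JJ. x j * ?e j) = x j0"
    proof -
      have "(\<Sum>j\<in>JJ. x j * ?e j) = (\<Sum>j\<in>JJ. if j = j0 then x j else 0)" by (intro sum.cong) auto
      also have "\<dots> = x j0" using j0 finite_colset[OF finT] by simp
      finally show ?thesis .
    qed
    ultimately show "x j0 mod 3 = (\<lambda>_. 0) j0 mod 3" by simp
  qed
  moreover have "(\<lambda>_. 0) \<in> dual_code JJ (dual_code JJ CC)" unfolding dual_code_def words3_def by simp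
  ultimately show ?thesis unfolding is_LCD_def using zero_dual by blast
qed

end


lemma ex1_eq': "\<exists>!x. P x \<Longrightarrow> P a \<Longrightarrow> P b \<Longrightarrow> a = b"
  by blast

definition vec :: "nat \<Rightarrow> (nat + (nat \<Rightarrow> int)) \<Rightarrow> (nat \<Rightarrow> int)" where
  "vec n1 j = (case j of Inl a \<Rightarrow> alphavec n1 a | Inr x \<Rightarrow> x)"

lemma Gp_vec: "Gprime n1 n i j = dI n (alphavec n1 i) (vec n1 j) mod 3"
  unfolding vec_def by (cases j) (simp_all add: Gp_Inl Gp_Inr)

context cctx
begin

lemma piz_Y: "piz n1 n T d i mod 3 = dI n (alphavec n1 i) (\<lambda>k. \<Sum>j\<in>JJ. d j * vec n1 j k) mod 3"
proof -
  have "piz n1 n T d i mod 3 = (\<Sum>j\<in>JJ. d j * dI n (alphavec n1 i) (vec n1 j)) mod 3"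
    unfolding piz_def by (rule sum_mod_cong) (simp add: Gp_vec mod_mult_right_eq)
  also have "(\<Sum>j\<in>JJ. d j * dI n (alphavec n1 i) (vec n1 j)) = (\<Sum>j\<in>JJ. \<Sum>k<n. alphavec n1 i k * (d j * vec n1 j k))"
    unfolding dI_def by (simp add: sum_distrib_left mult_ac)
  also have "\<dots> = (\<Sum>k<n. \<Sum>j\<in>JJ. alphavec n1 i k * (d j * vec n1 j k))" by (rule sum.swap)
  also have "\<dots> = dI n (alphavec n1 i) (\<lambda>k. \<Sum>j\<in>JJ. d j * vec n1 j k)"
    unfolding dI_def by (simp add: sum_distrib_left)
  finally show ?thesis .
qed

lemma dual_Y:
  assumes "d \<in> dual_code JJ CC"
  shows "\<And>k. k < n \<Longrightarrow> (3::int) dvd (\<Sum>j\<in>JJ. d j * vec n1 j k)"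
proof -
  have "\<And>i. i < n \<Longrightarrow> (3::int) dvd dI n (alphavec n1 i) (\<lambda>k. \<Sum>j\<in>JJ. d j * vec n1 j k)"
  proof -
    fix i assume i: "i < n"
    have "(3::int) dvd piz n1 n T d i" using assms i unfolding dual_iff by simp
    then show "(3::int) dvd dI n (alphavec n1 i) (\<lambda>k. \<Sum>j\<in>JJ. d j * vec n1 j k)"
      using piz_Y[of d i] mod3_dvd_iff by blast
  qed
  then show "\<And>k. k < n \<Longrightarrow> (3::int) dvd (\<Sum>j\<in>JJ. d j * vec n1 j k)"
    using L3[OF n1 n1n] by blast
qed


lemma alpha_self: "a < n \<Longrightarrow> alphavec n1 a a = 1"
  using n1 unfolding alpha_val by auto

lemma alpha_V: "a < n \<Longrightarrow> alphavec n1 a \<in> F3vec n"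
  unfolding F3vec_def alpha_val by auto

lemma dvd3_unit: "(c::int) \<in> {1,2} \<Longrightarrow> 3 dvd c * x \<Longrightarrow> 3 dvd x"
proof -
  assume c: "c \<in> {1,2}" and d: "3 dvd c * x"
  show "3 dvd x"
  proof (cases "c = 1")
    case True then show ?thesis using d by simp
  next
    case False
    then have "c = 2" using c by auto
    then have "3 dvd 2 * x" using d by simp
    have "3 dvd 3 * x" by simp
    from dvd_diff[OF this \<open>3 dvd 2 * x\<close>] have "3 dvd (3 * x - 2 * x)" .
    then show ?thesis by simp
  qed
qed

lemma eq_vscale:
  assumes x: "x \<in> F3vec n" and y: "y \<in> F3vec n" and mu: "mu \<in> {1,2}"
    and H: "\<And>k. k < n \<Longrightarrow> x k mod 3 = (mu * y k) mod 3"
  shows "x = vscale3 mu y"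
proof
  fix k show "x k = vscale3 mu y k"
  proof (cases "k < n")
    case True
    have "x k \<in> {0,1,2}" using F3vec_vals[OF x] .
    then have "x k = x k mod 3" by auto
    then show ?thesis using H[OF True] unfolding vscale3_def by simp
  next
    case False then show ?thesis using x y unfolding F3vec_def vscale3_def by simp
  qed
qed

lemma sym_rel:
  assumes "lam \<in> {1,2::int}" "X mod 3 = (lam * Y) mod 3"
  shows "Y mod 3 = (lam * X) mod 3"
proof -
  have "(lam * X) mod 3 = (lam * (X mod 3)) mod 3" by (simp add: mod_mult_right_eq)
  also have "\<dots> = (lam * ((lam * Y) mod 3)) mod 3" using assms(2) by simp
  also have "\<dots> = (lam * lam * Y) mod 3" by (simp add: mod_mult_right_eq mult.assoc)
  also have "\<dots> = Y mod 3"
  proof (cases "lam = 1")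
    case True then show ?thesis by simp
  next
    case False then have "lam = 2" using assms(1) by auto
    then have "lam * lam * Y = Y + Y * 3" by simp
    then show ?thesis by (simp only: mod_mult_self1)
  qed
  finally show ?thesis by simp
qed

end

locale mctx = cctx n1 n T for n1 n T +
  fixes n2 s :: nat and u v :: "nat \<Rightarrow> int"
  assumes n2: "n2 \<ge> 1" and n_def: "n = n1 + 2 * n2 + s"
    and u: "\<forall>i<n1. u i \<in> {1, 2}" and v: "\<forall>i<n1. v i \<in> {1, 2}"
    and T_sub: "T \<subseteq> Dzero n (fF n1 n2 u v) - {\<lambda>_. 0}"
    and T_rep: "\<forall>w \<in> Dzero n (fF n1 n2 u v) - {\<lambda>_. 0}.
                  \<exists>!p. fst p \<in> {1, 2} \<and> snd p \<in> T \<and> w = vscale3 (fst p) (snd p)"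
begin

lemma T_props: "x \<in> T \<Longrightarrow> x \<in> F3vec n \<and> fF n1 n2 u v x = 0 \<and> x \<noteq> (\<lambda>_. 0)"
  using T_sub unfolding Dzero_def by auto

lemma f_alpha_nz:
  assumes a: "a < n"
  shows "fF n1 n2 u v (alphavec n1 a) \<noteq> 0"
proof -
  let ?w = "alphavec n1 a"
  have YZ0: "YZ n1 n2 ?w = 0"
  proof -
    have *: "\<And>i. i < n2 \<Longrightarrow> ?w (n1 + i) * ?w (n1 + n2 + i) = 0"
      using n1 unfolding alpha_val by auto
    show ?thesis unfolding YZ_def
    proof (rule sum.neutral, rule ballI)
      fix i assume "i \<in> {..<n2}"
      then show "?w (n1 + i) * ?w (n1 + n2 + i) = 0" using * by simp
    qed
  qed
  have Q: "Qf n1 c ?w = (if a < n1 then c a else c 0)" for c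
  proof (cases "a < n1")
    case True
    have "Qf n1 c ?w = (\<Sum>i<n1. if i = a then c i else 0)"
      unfolding Qf_def alpha_val using True by (intro sum.cong) auto
    then show ?thesis using True by simp
  next
    case False
    have "Qf n1 c ?w = (\<Sum>i<n1. if i = 0 then c i else 0)"
      unfolding Qf_def alpha_val using False by (intro sum.cong) auto
    then show ?thesis using False n1 by simp
  qed
  have u0: "u 0 \<in> {1,2}" "v 0 \<in> {1,2}" using u v n1 by auto
  have "Pf n1 n2 u v ?w \<in> {1,2}"
    unfolding Pf_def YZ0 Q using u v u0 by auto
  then show ?thesis unfolding fF_Pf by auto
qed

lemma no_prop:
  assumes j1: "j1 \<in> JJ" and j2: "j2 \<in> JJ" and ne: "j1 \<noteq> j2" and lam: "lam \<in> {1,2}"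
    and H: "\<And>k. k < n \<Longrightarrow> vec n1 j1 k mod 3 = (lam * vec n1 j2 k) mod 3"
  shows False
proof -
  have H': "\<And>k. k < n \<Longrightarrow> vec n1 j2 k mod 3 = (lam * vec n1 j1 k) mod 3"
    using H sym_rel[OF lam] by blast
  have inl_inr: False if a: "a < n" and x: "x \<in> T" and mu: "mu \<in> {1,2}"
    and R: "\<And>k. k < n \<Longrightarrow> x k mod 3 = (mu * alphavec n1 a k) mod 3" for a x mu
  proof -
    have xp: "x \<in> F3vec n" "fF n1 n2 u v x = 0" using T_props[OF x] by auto
    have "x = vscale3 mu (alphavec n1 a)" by (rule eq_vscale[OF xp(1) alpha_V[OF a] mu R])
    then have "fF n1 n2 u v x = fF n1 n2 u v (alphavec n1 a)" using fF_scale[OF alpha_V[OF a] mu] by simp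
    then show False using xp(2) f_alpha_nz[OF a] by simp
  qed
  show False
  proof (cases j1)
    case (Inl a)
    then have a: "a < n" using j1 unfolding colset_def by auto
    show False
    proof (cases j2)
      case (Inl b)
      then have b: "b < n" using j2 unfolding colset_def by auto
      have ab: "a \<noteq> b" using ne Inl \<open>j1 = Inl a\<close> by auto
      show False
      proof (cases "a = 0 \<and> n1 \<le> b")
        case True
        have "alphavec n1 b b mod 3 = (lam * alphavec n1 a b) mod 3"
          using H'[OF b] Inl \<open>j1 = Inl a\<close> unfolding vec_def by simp
        moreover have "alphavec n1 a b = 0" using True ab n1 unfolding alpha_val by auto
        ultimately show False using alpha_self[OF b] by simp
      next
        case False
        have "alphavec n1 a a mod 3 = (lam * alphavec n1 b a) mod 3"
          using H[OF a] Inl \<open>j1 = Inl a\<close> unfolding vec_def by simp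
        moreover have "alphavec n1 b a = 0" using False ab unfolding alpha_val by auto
        ultimately show False using alpha_self[OF a] by simp
      qed
    next
      case (Inr x)
      then have x: "x \<in> T" using j2 unfolding colset_def by auto
      show False
        by (rule inl_inr[OF a x lam]) (use H' Inr \<open>j1 = Inl a\<close> in \<open>simp add: vec_def\<close>)
    qed
  next
    case (Inr x1)
    then have x1: "x1 \<in> T" using j1 unfolding colset_def by auto
    show False
    proof (cases j2)
      case (Inl a)
      then have a: "a < n" using j2 unfolding colset_def by auto
      show False
        by (rule inl_inr[OF a x1 lam]) (use H Inl \<open>j1 = Inr x1\<close> in \<open>simp add: vec_def\<close>)
    next
      case (Inr x2)
      then have x2: "x2 \<in> T" using j2 unfolding colset_def by auto
      have ne2: "x1 \<noteq> x2" using ne Inr \<open>j1 = Inr x1\<close> by auto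
      have x1p: "x1 \<in> F3vec n" and x2p: "x2 \<in> F3vec n" using T_props x1 x2 by auto
      have eq: "x1 = vscale3 lam x2"
        by (rule eq_vscale[OF x1p x2p lam]) (use H Inr \<open>j1 = Inr x1\<close> in \<open>simp add: vec_def\<close>)
      have x1D: "x1 \<in> Dzero n (fF n1 n2 u v) - {\<lambda>_. 0}" using x1 T_sub by auto
      have ex1: "\<exists>!p. fst p \<in> {1, 2} \<and> snd p \<in> T \<and> x1 = vscale3 (fst p) (snd p)"
        using bspec[OF T_rep x1D] .
      have P1: "fst (1::int, x1) \<in> {1, 2} \<and> snd (1::int, x1) \<in> T \<and> x1 = vscale3 (fst (1::int, x1)) (snd (1::int, x1))"
        using x1 vscale_1[OF x1p] by simp
      have P2: "fst (lam, x2) \<in> {1, 2} \<and> snd (lam, x2) \<in> T \<and> x1 = vscale3 (fst (lam, x2)) (snd (lam, x2))"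
        using lam x2 eq by simp
      have "(1::int, x1) = (lam, x2)" by (rule ex1_eq'[OF ex1 P1 P2])
      then show False using ne2 by simp
    qed
  qed
qed


lemma vec_nz:
  assumes j: "j \<in> JJ"
  shows "\<exists>k<n. \<not> (3::int) dvd vec n1 j k"
proof (cases j)
  case (Inl a)
  then have a: "a < n" using j unfolding colset_def by auto
  then show ?thesis using alpha_self[OF a] Inl unfolding vec_def by auto
next
  case (Inr x)
  then have x: "x \<in> T" using j unfolding colset_def by auto
  have xp: "x \<in> F3vec n" "x \<noteq> (\<lambda>_. 0)" using T_props[OF x] by auto
  then obtain k where k: "x k \<noteq> 0" by auto
  have kn: "k < n"
  proof (rule ccontr)
    assume "\<not> k < n"
    then have "x k = 0" using xp(1) unfolding F3vec_def by simp
    then show False using k by simp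
  qed
  have "x k \<in> {1,2}" using F3vec_vals[OF xp(1), of k] k by auto
  then have "\<not> (3::int) dvd x k" by auto
  then show ?thesis using kn Inr unfolding vec_def by auto
qed

lemma rel_of_dvd:
  fixes x y d1 d2 :: int
  assumes d1: "d1 \<in> {1,2}" and d2: "d2 \<in> {1,2}" and H: "3 dvd d1 * x + d2 * y"
  shows "x mod 3 = (((- (d1 * d2)) mod 3) * y) mod 3"
proof -
  have "d1 = 1 \<or> d1 = 2" "d2 = 1 \<or> d2 = 2" using d1 d2 by auto
  then show ?thesis using H by (elim disjE) (simp_all, presburger+)
qed

lemma wt_ge3:
  assumes dD: "d \<in> dual_code JJ CC" and dnz: "d \<noteq> (\<lambda>_. 0)"
  shows "3 \<le> wt JJ d"
proof (rule ccontr)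
  assume "\<not> 3 \<le> wt JJ d"
  then have cS: "card {j \<in> JJ. d j \<noteq> 0} \<le> 2" unfolding wt_def by simp
  let ?S = "{j \<in> JJ. d j \<noteq> 0}"
  have finJ: "finite JJ" by (rule finite_colset[OF finT])
  have dW: "d \<in> words3 JJ" using dD unfolding dual_code_def by simp
  have dv: "\<And>j. j \<in> ?S \<Longrightarrow> d j \<in> {1,2}" using dW unfolding words3_def by auto
  have Y: "(3::int) dvd (\<Sum>j\<in>?S. d j * vec n1 j k)" if k: "k < n" for k
  proof -
    have "(\<Sum>j\<in>?S. d j * vec n1 j k) = (\<Sum>j\<in>JJ. if d j \<noteq> 0 then d j * vec n1 j k else 0)"
      by (rule sum.inter_filter[OF finJ])
    also have "\<dots> = (\<Sum>j\<in>JJ. d j * vec n1 j k)" by (intro sum.cong) auto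
    finally show ?thesis using dual_Y[OF dD k] by simp
  qed
  have "card ?S = 0 \<or> card ?S = 1 \<or> card ?S = 2" using cS by auto
  then show False
  proof (elim disjE)
    assume "card ?S = 0"
    then have "?S = {}" using finJ by simp
    then have "d = (\<lambda>_. 0)" using dW unfolding words3_def by (auto simp: fun_eq_iff)
    then show False using dnz by simp
  next
    assume "card ?S = 1"
    then obtain j1 where S1: "?S = {j1}" by (rule card_1_singletonE)
    then have j1: "j1 \<in> JJ" "d j1 \<in> {1,2}" using dv by auto
    obtain k where k: "k < n" "\<not> (3::int) dvd vec n1 j1 k" using vec_nz[OF j1(1)] by blast
    have "(3::int) dvd d j1 * vec n1 j1 k" using Y[OF k(1)] S1 by simp
    then have "(3::int) dvd vec n1 j1 k" by (rule dvd3_unit[OF j1(2)])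
    then show False using k(2) by simp
  next
    assume "card ?S = 2"
    then obtain j1 j2 where S2: "?S = {j1, j2}" and ne: "j1 \<noteq> j2" by (meson card_2_iff)
    then have j12: "j1 \<in> JJ" "j2 \<in> JJ" "d j1 \<in> {1,2}" "d j2 \<in> {1,2}" using dv by auto
    let ?lam = "(- (d j1 * d j2)) mod 3"
    have lam: "?lam \<in> {1,2}" using j12(3,4) by auto
    have "vec n1 j1 k mod 3 = (?lam * vec n1 j2 k) mod 3" if k: "k < n" for k
    proof -
      have "(3::int) dvd d j1 * vec n1 j1 k + d j2 * vec n1 j2 k" using Y[OF k] S2 ne by simp
      then show ?thesis by (rule rel_of_dvd[OF j12(3,4)])
    qed
    then show False by (rule no_prop[OF j12(1,2) ne lam])
  qed
qed


lemma n1_lt: "n1 < n" using n_def n2 by simp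

lemma ey_D: "unitvec n1 \<in> Dzero n (fF n1 n2 u v) - {\<lambda>_. 0}"
proof -
  let ?e = "unitvec n1"
  have eV: "?e \<in> F3vec n" by (rule unit_V[OF n1_lt])
  have zz: "zzero n1 n2 ?e" unfolding zzero_def unitvec_def by simp
  have Q: "Qf n1 u ?e = 0" unfolding Qf_def unitvec_def by simp
  have Y: "YZ n1 n2 ?e = 0" unfolding YZ_def unitvec_def by simp
  have "fF n1 n2 u v ?e = 0" unfolding fF_Pf Pf_def using zz Q Y by simp
  moreover have "?e \<noteq> (\<lambda>_. 0)" unfolding unitvec_def by (metis one_neq_zero)
  ultimately show ?thesis using eV unfolding Dzero_def by simp
qed

lemma sum_three:
  assumes A: "finite A" "x \<in> A" "y \<in> A" "z \<in> A" "x \<noteq> y" "x \<noteq> z" "y \<noteq> z"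
    and g0: "\<And>j. j \<in> A \<Longrightarrow> j \<notin> {x,y,z} \<Longrightarrow> g j = 0"
  shows "(\<Sum>j\<in>A. g j) = g x + g y + (g z :: int)"
proof -
  have "(\<Sum>j\<in>A. g j) = (\<Sum>j\<in>{x,y,z}. g j)"
    by (rule sum.mono_neutral_right) (use A g0 in auto)
  also have "\<dots> = g x + g y + g z" using A by simp
  finally show ?thesis .
qed

lemma exists_wt3: "\<exists>d\<in>dual_code JJ CC. d \<noteq> (\<lambda>_. 0) \<and> wt JJ d = 3"
proof -
  obtain p where p: "fst p \<in> {1,2}" "snd p \<in> T" "unitvec n1 = vscale3 (fst p) (snd p)"
    using ex1_implies_ex[OF bspec[OF T_rep ey_D]] by blast
  define a where "a = fst p"
  define t where "t = snd p"
  have a: "a \<in> {1,2}" and tT: "t \<in> T" and et: "unitvec n1 = vscale3 a t" using p unfolding a_def t_def by auto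
  have tV: "t \<in> F3vec n" using T_props[OF tT] by simp
  have tval: "t = vscale3 a (unitvec n1)" using vscale_vscale[OF tV a] et by simp
  have n1pos: "0 < n1" "n1 \<noteq> 0" using n1 by auto
  have J0: "Inl 0 \<in> JJ" "Inl n1 \<in> JJ" "Inr t \<in> JJ" using n1_lt tT unfolding colset_def by auto
  have dist: "(Inl 0 :: nat + (nat \<Rightarrow> int)) \<noteq> Inl n1" "(Inl 0 :: nat + (nat \<Rightarrow> int)) \<noteq> Inr t" "(Inl n1 :: nat + (nat \<Rightarrow> int)) \<noteq> Inr t"
    using n1pos by auto
  define d where "d = (\<lambda>j::nat + (nat \<Rightarrow> int). if j = Inl 0 then 2 else if j = Inl n1 then 1 else if j = Inr t then (2 * a) mod 3 else (0::int))"
  have a2: "(2 * a) mod 3 \<in> {1,2}" using a by auto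
  have dW: "d \<in> words3 JJ" using J0 a2 unfolding d_def words3_def by auto
  have dsum: "(\<Sum>j\<in>JJ. d j * g j) = 2 * g (Inl 0) + g (Inl n1) + (2 * a) mod 3 * g (Inr t)" for g
  proof -
    have "(\<Sum>j\<in>JJ. d j * g j) = d (Inl 0) * g (Inl 0) + d (Inl n1) * g (Inl n1) + d (Inr t) * g (Inr t)"
      by (rule sum_three[OF finite_colset[OF finT] J0 dist]) (simp add: d_def)
    then show ?thesis using dist unfolding d_def by simp
  qed
  have Yk: "(3::int) dvd (\<Sum>j\<in>JJ. d j * vec n1 j k)" for k
  proof -
    have "(\<Sum>j\<in>JJ. d j * vec n1 j k) = 2 * alphavec n1 0 k + alphavec n1 n1 k + (2 * a) mod 3 * t k"
      unfolding dsum vec_def by simp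
    also have "\<dots> = (if k = 0 then 3 else if k = n1 then 1 + (2 * a) mod 3 * (a mod 3) else 0)"
      using n1pos unfolding tval alpha_val vscale3_def unitvec_def by auto
    finally have e: "(\<Sum>j\<in>JJ. d j * vec n1 j k) = (if k = 0 then 3 else if k = n1 then 1 + (2 * a) mod 3 * (a mod 3) else 0)" .
    have "(3::int) dvd 1 + (2 * a) mod 3 * (a mod 3)" using a by auto
    then show ?thesis unfolding e by auto
  qed
  have "(3::int) dvd piz n1 n T d i" if "i < n" for i
  proof -
    have "(3::int) dvd dI n (alphavec n1 i) (\<lambda>k. \<Sum>j\<in>JJ. d j * vec n1 j k)"
      unfolding dI_def by (intro dvd_sum dvd_mult Yk)
    then show ?thesis using piz_Y[of d i] mod3_dvd_iff by blast
  qed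
  then have dD: "d \<in> dual_code JJ CC" unfolding dual_iff using dW by simp
  have "{j \<in> JJ. d j \<noteq> 0} = {Inl 0, Inl n1, Inr t}"
    using J0 a2 dist unfolding d_def by auto
  then have "wt JJ d = 3" unfolding wt_def using dist by simp
  moreover have "d \<noteq> (\<lambda>_. 0)" using fun_cong[of d "\<lambda>_. 0" "Inl 0"] unfolding d_def by auto
  ultimately show ?thesis using dD by blast
qed

lemma min_dist_dual: "min_dist JJ (dual_code JJ CC) 3"
  unfolding min_dist_def using exists_wt3 wt_ge3 by blast

end


theorem theorem11:
  fixes n1 n2 s n :: nat and u v :: "nat \<Rightarrow> int" and eps0 :: int
    and T :: "(nat \<Rightarrow> int) set"
  assumes n1: "n1 \<ge> 1" and n2: "n2 \<ge> 1" and n_def: "n = n1 + 2 * n2 + s"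
    and u: "\<forall>i<n1. u i \<in> {1, 2}" and v: "\<forall>i<n1. v i \<in> {1, 2}"
    and eps0: "is_type n s (fF n1 n2 u v) eps0"
    and T_sub: "T \<subseteq> Dzero n (fF n1 n2 u v) - {\<lambda>_. 0}"
    and T_rep: "\<forall>w \<in> Dzero n (fF n1 n2 u v) - {\<lambda>_. 0}.
                  \<exists>!p. fst p \<in> {1, 2} \<and> snd p \<in> T \<and> w = vscale3 (fst p) (snd p)"
  shows
    "(even (n + s) \<and> s + 4 \<le> n \<and> n + s \<ge> 6 \<longrightarrow>
       (let K' = (3 ^ (n - 1) + 2 * eps0 * 3 ^ ((n + s) div 2 - 1) - 1) div 2;
            J = colset n T; C = gen_code n J (Gprime n1 n)
        in code_NK J C (K' + int n) (int n) \<and> is_LCD J C \<and>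
           code_NK J (dual_code J C) (K' + int n) K' \<and>
           min_dist J (dual_code J C) 3 \<and> is_LCD J (dual_code J C)))
   \<and> (odd (n + s) \<and> s + 3 \<le> n \<and> n + s \<ge> 5 \<longrightarrow>
       (let K' = (3 ^ (n - 1) - 1) div 2;
            J = colset n T; C = gen_code n J (Gprime n1 n)
        in code_NK J C (K' + int n) (int n) \<and> is_LCD J C \<and>
           code_NK J (dual_code J C) (K' + int n) K' \<and>
           min_dist J (dual_code J C) 3 \<and> is_LCD J (dual_code J C)))"
proof -
  let ?f = "fF n1 n2 u v"
  have finT: "finite T" by (rule finT[OF n1 n2 n_def u v T_sub T_rep])
  have cDT: "card (Dzero n ?f) = 2 * card T + 1" by (rule card_D_T[OF n1 n2 n_def u v T_sub T_rep])
  have main: "code_NK (colset n T) (gen_code n (colset n T) (Gprime n1 n)) (int (card T) + int n) (int n) \<and>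
           is_LCD (colset n T) (gen_code n (colset n T) (Gprime n1 n)) \<and>
           code_NK (colset n T) (dual_code (colset n T) (gen_code n (colset n T) (Gprime n1 n))) (int (card T) + int n) (int (card T)) \<and>
           min_dist (colset n T) (dual_code (colset n T) (gen_code n (colset n T) (Gprime n1 n))) 3 \<and>
           is_LCD (colset n T) (dual_code (colset n T) (gen_code n (colset n T) (Gprime n1 n)))"
    if n4: "4 \<le> n" and cond: "4 \<le> n1 + n2 + s \<or> n1 = 1"
  proof -
    have Sd: "\<And>k l. k < n \<Longrightarrow> l < n \<Longrightarrow> (3::int) dvd (\<Sum>x\<in>T. x k * x l)"
      using sumT_dvd[OF n1 n2 n_def u v T_sub T_rep _ _ n4 cond] by blast
    have cc: "cctx n1 n T"
      by (rule cctx.intro) (use n1 n_def finT Sd in auto)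
    have mc: "mctx n1 n T n2 s u v"
      by (rule mctx.intro[OF cc], rule mctx_axioms.intro) (use n2 n_def u v T_sub T_rep in auto)
    interpret M: mctx n1 n T n2 s u v by (rule mc)
    have GC: "gen_code n (colset n T) (Gprime n1 n) = wd n1 n T ` F3vec n" by (rule gen_code_wd)
    show ?thesis unfolding GC code_NK_def
      using M.card_C M.LCD_C M.card_dual M.min_dist_dual M.LCD_dual M.card_colset finite_colset[OF finT]
      by (simp add: nat_int)
  qed
  show ?thesis
  proof (intro conjI impI)
    assume H: "even (n + s) \<and> s + 4 \<le> n \<and> n + s \<ge> 6"
    have ev1: "even n1" using H n_def by simp
    have n12: "n1 \<ge> 2" using ev1 n1 by presburger
    have n4: "4 \<le> n" and cond: "4 \<le> n1 + n2 + s \<or> n1 = 1" using H n_def n2 n12 by auto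
    have c3: "3 * int (card (Dzero n ?f)) = 3 ^ n + 2 * eps0 * 3 ^ ((n + s) div 2)"
      by (rule cardD_even[OF n_def u ev1 eps0])
    define h where "h = (n + s) div 2"
    have h1: "h \<ge> 1" using H unfolding h_def by auto
    have nn: "n \<ge> 1" using n4 by simp
    have p1: "(3::int) ^ n = 3 * 3 ^ (n - 1)" using nn by (metis Suc_diff_1 less_le_trans power_Suc zero_less_one)
    have p2: "(3::int) ^ h = 3 * 3 ^ (h - 1)" using h1 by (metis Suc_diff_1 less_le_trans power_Suc zero_less_one)
    have "3 * (2 * int (card T) + 1) = 3 * (3 ^ (n - 1) + 2 * eps0 * 3 ^ (h - 1))"
      using c3 cDT p1 p2 unfolding h_def[symmetric] by (simp add: algebra_simps)
    then have "2 * int (card T) = 3 ^ (n - 1) + 2 * eps0 * 3 ^ (h - 1) - 1" by simp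
    then have K: "(3 ^ (n - 1) + 2 * eps0 * 3 ^ ((n + s) div 2 - 1) - 1) div 2 = int (card T)"
      unfolding h_def[symmetric] by simp
    show "let K' = (3 ^ (n - 1) + 2 * eps0 * 3 ^ ((n + s) div 2 - 1) - 1) div 2;
            J = colset n T; C = gen_code n J (Gprime n1 n)
        in code_NK J C (K' + int n) (int n) \<and> is_LCD J C \<and>
           code_NK J (dual_code J C) (K' + int n) K' \<and>
           min_dist J (dual_code J C) 3 \<and> is_LCD J (dual_code J C)"
      unfolding Let_def K using main[OF n4 cond] by simp
  next
    assume H: "odd (n + s) \<and> s + 3 \<le> n \<and> n + s \<ge> 5"
    have od1: "odd n1" using H n_def by simp
    have n4: "4 \<le> n" and cond: "4 \<le> n1 + n2 + s \<or> n1 = 1" using H n_def n2 n1 by auto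
    have cD: "card (Dzero n ?f) = 3 ^ (n - 1)" by (rule cardD_odd[OF n_def u od1])
    have e: "Suc (2 * card T) = 3 ^ (n - 1)" using cD cDT by simp
    have "2 * int (card T) = 3 ^ (n - 1) - 1" using arg_cong[OF e, of int] by simp
    then have K: "(3 ^ (n - 1) - 1) div 2 = int (card T)" by simp
    show "let K' = (3 ^ (n - 1) - 1) div 2;
            J = colset n T; C = gen_code n J (Gprime n1 n)
        in code_NK J C (K' + int n) (int n) \<and> is_LCD J C \<and>
           code_NK J (dual_code J C) (K' + int n) K' \<and>
           min_dist J (dual_code J C) 3 \<and> is_LCD J (dual_code J C)"
      unfolding Let_def K using main[OF n4 cond] by simp
  qed
qed


end
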